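(* Let $i:B\to A$ be a $k$-linear $X$-functor from a diagonal $k$-linear category $B$ to a $k$-linear category $A$, and assume that $A_{xy}$ is a finitely generated projective left $B_x$-module for all $x,y\in X$. Let $\mathcal{A}={}_B{\rm End}(A)$. For a descent datum $(M,\sigma)$, define a right $\mathcal{A}$-action on $M$ by $mf=m_{<0>}f(m_{<1>})\in M_{xz}$ for $m\in M_{xy}$, $f\in\mathcal{A}^x_{yz}$. This defines a functor $\underline{\rm Desc}_B(A)\to\mathcal{M}_\mathcal{A}$, $(M,\sigma)\mapsto M$, acting as the identity on morphisms, and this functor is an isomorphism of categories.
   Context: Let $k$ be a commutative ring; unadorned $\otimes$ is over $k$. A $k$-linear category $A$ with class of objects $X$ consists of $k$-modules $A_{xy}$, associative compositions $A_{xy}\otimes A_{yz}\to A_{xz}$, $a\otimes b\mapsto ab$, and units $1_x\in A_{xx}$. A right $A$-module is a family $(M_{xy})_{x,y\in X}$ with maps $M_{xy}\otimes A_{yz}\to M_{xz}$, associative and unital. A diagonal $k$-linear category $B$ is a family of $k$-algebras $(B_x)_{x\in X}$. A $k$-linear $X$-functor $i:B\to A$ amounts to $k$-algebra morphisms $i_x:B_x\to A_{xx}$, making $A_{xy}$ a $B_x$-$B_y$-bimodule and $M_{xy}$ a right $B_y$-module. A descent datum $(M,\sigma)$ is a right $A$-module $M$ with $k$-linear maps $\sigma_{xy}:M_{xy}\to M_{xx}\otimes_{B_x}A_{xy}$, $\sigma_{xy}(m)=m_{<0>}\otimes_{B_x}m_{<1>}$, such that for all $m\in M_{xy}$, $a\in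 A_{yz}$: (i) $\sigma_{xz}(ma)=m_{<0>}\otimes_{B_x}m_{<1>}a$; (ii) $\sigma_{xx}(m_{<0>})\otimes_{B_x}m_{<1>}=m_{<0>}\otimes_{B_x}1_x\otimes_{B_x}m_{<1>}$; (iii) $m_{<0>}m_{<1>}=m$. Morphisms of descent data are right $A$-module morphisms $f$ with $f_{xx}(m_{<0>})\otimes_{B_x}m_{<1>}=\sigma'_{xy}(f_{xy}(m))$; the category is $\underline{\rm Desc}_B(A)$. A $k$-linear cluster $\mathcal{A}$ with objects $X$ is a family $(\mathcal{A}^x)_{x\in X}$ of $k$-linear categories with object class $X$; $\mathcal{A}^x_{yz}$ has unit $1^x_y\in\mathcal{A}^x_{yy}$. A right $\mathcal{A}$-module is a family $(M_{xy})$ of $k$-modules with maps $M_{xy}\otimes\mathcal{A}^x_{yz}\to M_{xz}$, $m\otimes f\mapsto mf$, with $m(fg)=(mf)g$ and $m1^x_y=m$; morphisms are families $\varphi_{xy}$ with $\varphi_{xz}(mf)=\varphi_{xy}(m)f$; the category is $\mathcal{M}_\mathcal{A}$. The left endocluster $\mathcal{A}={}_B{\rm End}(A)$ is given by $\mathcal{A}^x_{yz}={}_{B_x}{\rm Hom}(A_{xy},A_{xz})$ with multiplication $fg=g\circ f$ and unit $1^x_y={\rm id}_{A_{xy}}$. *)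

theory Defs
  imports Main "HOL.Modules" "HOL-Library.FuncSet" "HOL-Library.Function_Algebras"
begin

text \<open>All hom-modules A_xy are k-submodules of one ambient k-module (type 'a, scalar sA);
  likewise the algebras B_x inside type 'b and module families M_xy inside type 'm.
  Compositions / actions carry all object indices.\<close>

definition ksubmod :: "('k \<Rightarrow> 'm::ab_group_add \<Rightarrow> 'm) \<Rightarrow> 'm set \<Rightarrow> bool" where
  "ksubmod s S \<longleftrightarrow> 0 \<in> S \<and> (\<forall>x\<in>S. \<forall>y\<in>S. x + y \<in> S) \<and> (\<forall>c. \<forall>x\<in>S. s c x \<in> S)"

record ('k, 'x, 'a, 'b) kdata =
  sA  :: "'k \<Rightarrow> 'a \<Rightarrow> 'a"
  Ah  :: "'x \<Rightarrow> 'x \<Rightarrow> 'a set"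
  cmp :: "'x \<Rightarrow> 'x \<Rightarrow> 'x \<Rightarrow> 'a \<Rightarrow> 'a \<Rightarrow> 'a"
  one :: "'x \<Rightarrow> 'a"
  sB  :: "'k \<Rightarrow> 'b \<Rightarrow> 'b"
  Bc  :: "'x \<Rightarrow> 'b set"
  bm  :: "'x \<Rightarrow> 'b \<Rightarrow> 'b \<Rightarrow> 'b"
  bone :: "'x \<Rightarrow> 'b"
  fi  :: "'x \<Rightarrow> 'b \<Rightarrow> 'a"

definition klin_cat :: "('k::comm_ring_1, 'x, 'a::ab_group_add, 'b) kdata \<Rightarrow> bool" where
  "klin_cat D \<longleftrightarrow> module (sA D) \<and>
     (\<forall>x y. ksubmod (sA D) (Ah D x y)) \<and>
     (\<forall>x y z. \<forall>a\<in>Ah D x y. \<forall>b\<in>Ah D y z. cmp D x y z a b \<in> Ah D x z) \<and>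
     (\<forall>x y z. \<forall>a\<in>Ah D x y. \<forall>a'\<in>Ah D x y. \<forall>b\<in>Ah D y z.
        cmp D x y z (a + a') b = cmp D x y z a b + cmp D x y z a' b) \<and>
     (\<forall>x y z. \<forall>a\<in>Ah D x y. \<forall>b\<in>Ah D y z. \<forall>b'\<in>Ah D y z.
        cmp D x y z a (b + b') = cmp D x y z a b + cmp D x y z a b') \<and>
     (\<forall>x y z c. \<forall>a\<in>Ah D x y. \<forall>b\<in>Ah D y z.
        cmp D x y z (sA D c a) b = sA D c (cmp D x y z a b) \<and>
        cmp D x y z a (sA D c b) = sA D c (cmp D x y z a b)) \<and>
     (\<forall>x y z w. \<forall>a\<in>Ah D x y. \<forall>b\<in>Ah D y z. \<forall>c\<in>Ah D z w.
        cmp D x z w (cmp D x y z a b) c = cmp D x y w a (cmp D y z w b c)) \<and>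
     (\<forall>x. one D x \<in> Ah D x x) \<and>
     (\<forall>x y. \<forall>a\<in>Ah D x y. cmp D x x y (one D x) a = a \<and> cmp D x y y a (one D y) = a)"

text \<open>Diagonal k-linear category: a family of k-algebras B_x.\<close>
definition diag_cat :: "('k::comm_ring_1, 'x, 'a, 'b::ab_group_add) kdata \<Rightarrow> bool" where
  "diag_cat D \<longleftrightarrow> module (sB D) \<and>
     (\<forall>x. ksubmod (sB D) (Bc D x)) \<and>
     (\<forall>x. \<forall>a\<in>Bc D x. \<forall>b\<in>Bc D x. bm D x a b \<in> Bc D x) \<and>
     (\<forall>x. \<forall>a\<in>Bc D x. \<forall>a'\<in>Bc D x. \<forall>b\<in>Bc D x.
        bm D x (a + a') b = bm D x a b + bm D x a' b \<and>
        bm D x b (a + a') = bm D x b a + bm D x b a') \<and>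
     (\<forall>x c. \<forall>a\<in>Bc D x. \<forall>b\<in>Bc D x.
        bm D x (sB D c a) b = sB D c (bm D x a b) \<and> bm D x a (sB D c b) = sB D c (bm D x a b)) \<and>
     (\<forall>x. \<forall>a\<in>Bc D x. \<forall>b\<in>Bc D x. \<forall>c\<in>Bc D x. bm D x (bm D x a b) c = bm D x a (bm D x b c)) \<and>
     (\<forall>x. bone D x \<in> Bc D x) \<and>
     (\<forall>x. \<forall>a\<in>Bc D x. bm D x (bone D x) a = a \<and> bm D x a (bone D x) = a)"

text \<open>k-linear X-functor i : B \<rightarrow> A, i.e. k-algebra maps i_x : B_x \<rightarrow> A_xx.\<close>
definition xfunctor :: "('k::comm_ring_1, 'x, 'a::ab_group_add, 'b::ab_group_add) kdata \<Rightarrow> bool" where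
  "xfunctor D \<longleftrightarrow>
     (\<forall>x. \<forall>b\<in>Bc D x. fi D x b \<in> Ah D x x) \<and>
     (\<forall>x. \<forall>b\<in>Bc D x. \<forall>b'\<in>Bc D x. fi D x (b + b') = fi D x b + fi D x b') \<and>
     (\<forall>x c. \<forall>b\<in>Bc D x. fi D x (sB D c b) = sA D c (fi D x b)) \<and>
     (\<forall>x. \<forall>b\<in>Bc D x. \<forall>b'\<in>Bc D x. fi D x (bm D x b b') = cmp D x x x (fi D x b) (fi D x b')) \<and>
     (\<forall>x. fi D x (bone D x) = one D x)"

definition lB :: "('k, 'x, 'a, 'b) kdata \<Rightarrow> 'x \<Rightarrow> 'x \<Rightarrow> 'b \<Rightarrow> 'a \<Rightarrow> 'a" where
  "lB D x y b a = cmp D x x y (fi D x b) a"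

definition Blin_dual :: "('k, 'x, 'a::ab_group_add, 'b::ab_group_add) kdata \<Rightarrow> 'x \<Rightarrow> 'x \<Rightarrow> ('a \<Rightarrow> 'b) \<Rightarrow> bool" where
  "Blin_dual D x y \<phi> \<longleftrightarrow> (\<forall>a\<in>Ah D x y. \<phi> a \<in> Bc D x) \<and>
     (\<forall>a\<in>Ah D x y. \<forall>a'\<in>Ah D x y. \<phi> (a + a') = \<phi> a + \<phi> a') \<and>
     (\<forall>b\<in>Bc D x. \<forall>a\<in>Ah D x y. \<phi> (lB D x y b a) = bm D x b (\<phi> a))"

text \<open>A_xy is a finitely generated projective left B_x-module: it is a direct summand
  (retract) of a free module B_x^n, i.e. there are e_1..e_n in A_xy and B_x-linear
  maps phi_j : A_xy \<rightarrow> B_x with a = sum_j phi_j(a) . e_j (the retraction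
  B_x^n \<rightarrow> A_xy, (b_j) \<mapsto> sum b_j e_j, split by a \<mapsto> (phi_j a)).\<close>
definition fg_projective :: "('k, 'x, 'a::ab_group_add, 'b::ab_group_add) kdata \<Rightarrow> 'x \<Rightarrow> 'x \<Rightarrow> bool" where
  "fg_projective D x y \<longleftrightarrow> (\<exists>(n::nat) e \<phi>. (\<forall>j<n. e j \<in> Ah D x y) \<and> (\<forall>j<n. Blin_dual D x y (\<phi> j)) \<and>
      (\<forall>a\<in>Ah D x y. a = (\<Sum>j<n. lB D x y (\<phi> j a) (e j))))"

definition rmod :: "('k::comm_ring_1, 'x, 'a::ab_group_add, 'b) kdata \<Rightarrow> ('k \<Rightarrow> 'm::ab_group_add \<Rightarrow> 'm) \<Rightarrow>
    ('x \<Rightarrow> 'x \<Rightarrow> 'm set) \<Rightarrow> ('x \<Rightarrow> 'x \<Rightarrow> 'x \<Rightarrow> 'm \<Rightarrow> 'a \<Rightarrow> 'm) \<Rightarrow> bool" where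
  "rmod D sM Mc act \<longleftrightarrow> module sM \<and> (\<forall>x y. ksubmod sM (Mc x y)) \<and>
     (\<forall>x y z. \<forall>m\<in>Mc x y. \<forall>a\<in>Ah D y z. act x y z m a \<in> Mc x z) \<and>
     (\<forall>x y z. \<forall>m\<in>Mc x y. \<forall>m'\<in>Mc x y. \<forall>a\<in>Ah D y z.
        act x y z (m + m') a = act x y z m a + act x y z m' a) \<and>
     (\<forall>x y z. \<forall>m\<in>Mc x y. \<forall>a\<in>Ah D y z. \<forall>a'\<in>Ah D y z.
        act x y z m (a + a') = act x y z m a + act x y z m a') \<and>
     (\<forall>x y z c. \<forall>m\<in>Mc x y. \<forall>a\<in>Ah D y z.
        act x y z (sM c m) a = sM c (act x y z m a) \<and> act x y z m (sA D c a) = sM c (act x y z m a)) \<and>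
     (\<forall>x y z w. \<forall>m\<in>Mc x y. \<forall>a\<in>Ah D y z. \<forall>b\<in>Ah D z w.
        act x z w (act x y z m a) b = act x y w m (cmp D y z w a b)) \<and>
     (\<forall>x y. \<forall>m\<in>Mc x y. act x y y m (one D y) = m)"

definition klin_fam :: "('k \<Rightarrow> 'm::ab_group_add \<Rightarrow> 'm) \<Rightarrow> ('x \<Rightarrow> 'x \<Rightarrow> 'm set) \<Rightarrow>
    ('k \<Rightarrow> 'n::ab_group_add \<Rightarrow> 'n) \<Rightarrow> ('x \<Rightarrow> 'x \<Rightarrow> 'n set) \<Rightarrow> ('x \<Rightarrow> 'x \<Rightarrow> 'm \<Rightarrow> 'n) \<Rightarrow> bool" where
  "klin_fam sM Mc sN Nc f \<longleftrightarrow> (\<forall>x y. \<forall>m\<in>Mc x y. f x y m \<in> Nc x y) \<and>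
     (\<forall>x y. \<forall>m\<in>Mc x y. \<forall>m'\<in>Mc x y. f x y (m + m') = f x y m + f x y m') \<and>
     (\<forall>x y c. \<forall>m\<in>Mc x y. f x y (sM c m) = sN c (f x y m))"

definition rmod_hom :: "('k, 'x, 'a, 'b) kdata \<Rightarrow>
    ('k \<Rightarrow> 'm::ab_group_add \<Rightarrow> 'm) \<Rightarrow> ('x \<Rightarrow> 'x \<Rightarrow> 'm set) \<Rightarrow> ('x \<Rightarrow> 'x \<Rightarrow> 'x \<Rightarrow> 'm \<Rightarrow> 'a \<Rightarrow> 'm) \<Rightarrow>
    ('k \<Rightarrow> 'n::ab_group_add \<Rightarrow> 'n) \<Rightarrow> ('x \<Rightarrow> 'x \<Rightarrow> 'n set) \<Rightarrow> ('x \<Rightarrow> 'x \<Rightarrow> 'x \<Rightarrow> 'n \<Rightarrow> 'a \<Rightarrow> 'n) \<Rightarrow>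
    ('x \<Rightarrow> 'x \<Rightarrow> 'm \<Rightarrow> 'n) \<Rightarrow> bool" where
  "rmod_hom D sM Mc act sN Nc act' f \<longleftrightarrow> klin_fam sM Mc sN Nc f \<and>
     (\<forall>x y z. \<forall>m\<in>Mc x y. \<forall>a\<in>Ah D y z. f x z (act x y z m a) = act' x y z (f x y m) a)"

text \<open>An element of P \<otimes>_B Q is represented by a list [(p_1,q_1),...] standing for
  sum p_i \<otimes> q_i.  Two lists represent the same element iff the difference of their
  formal sums in the free abelian group on P \<times> Q lies in the subgroup generated by
  the bilinearity and B-balancing relations.\<close>

definition delta :: "'z \<Rightarrow> 'z \<Rightarrow> int" where
  "delta z = (\<lambda>w. if w = z then 1 else 0)"

definition formal :: "'z list \<Rightarrow> 'z \<Rightarrow> int" where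
  "formal L = sum_list (map delta L)"

inductive_set gsub :: "('z \<Rightarrow> int) set \<Rightarrow> ('z \<Rightarrow> int) set" for G where
  gsub_zero: "0 \<in> gsub G"
| gsub_gen: "g \<in> G \<Longrightarrow> g \<in> gsub G"
| gsub_diff: "u \<in> gsub G \<Longrightarrow> v \<in> gsub G \<Longrightarrow> u - v \<in> gsub G"

definition rel2 :: "'p::ab_group_add set \<Rightarrow> 'q::ab_group_add set \<Rightarrow> ('b \<Rightarrow> 'p \<Rightarrow> 'p) \<Rightarrow> ('b \<Rightarrow> 'q \<Rightarrow> 'q) \<Rightarrow>
    'b set \<Rightarrow> ('p \<times> 'q \<Rightarrow> int) set" where
  "rel2 P Q rP lQ Bs =
     {delta (p + p', q) - delta (p, q) - delta (p', q) | p p' q. p \<in> P \<and> p' \<in> P \<and> q \<in> Q} \<union>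
     {delta (p, q + q') - delta (p, q) - delta (p, q') | p q q'. p \<in> P \<and> q \<in> Q \<and> q' \<in> Q} \<union>
     {delta (rP b p, q) - delta (p, lQ b q) | b p q. b \<in> Bs \<and> p \<in> P \<and> q \<in> Q}"

definition teq2 :: "'p::ab_group_add set \<Rightarrow> 'q::ab_group_add set \<Rightarrow> ('b \<Rightarrow> 'p \<Rightarrow> 'p) \<Rightarrow> ('b \<Rightarrow> 'q \<Rightarrow> 'q) \<Rightarrow>
    'b set \<Rightarrow> ('p \<times> 'q) list \<Rightarrow> ('p \<times> 'q) list \<Rightarrow> bool" where
  "teq2 P Q rP lQ Bs L L' \<longleftrightarrow> set L \<subseteq> P \<times> Q \<and> set L' \<subseteq> P \<times> Q \<and>
     formal L - formal L' \<in> gsub (rel2 P Q rP lQ Bs)"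

definition rel3 :: "'p::ab_group_add set \<Rightarrow> 'q::ab_group_add set \<Rightarrow> 'r::ab_group_add set \<Rightarrow>
    ('b \<Rightarrow> 'p \<Rightarrow> 'p) \<Rightarrow> ('b \<Rightarrow> 'q \<Rightarrow> 'q) \<Rightarrow> ('b \<Rightarrow> 'q \<Rightarrow> 'q) \<Rightarrow> ('b \<Rightarrow> 'r \<Rightarrow> 'r) \<Rightarrow>
    'b set \<Rightarrow> ('p \<times> 'q \<times> 'r \<Rightarrow> int) set" where
  "rel3 P Q R rP lQ rQ lR Bs =
     {delta (p + p', q, r) - delta (p, q, r) - delta (p', q, r) | p p' q r. p \<in> P \<and> p' \<in> P \<and> q \<in> Q \<and> r \<in> R} \<union>
     {delta (p, q + q', r) - delta (p, q, r) - delta (p, q', r) | p q q' r. p \<in> P \<and> q \<in> Q \<and> q' \<in> Q \<and> r \<in> R} \<union>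
     {delta (p, q, r + r') - delta (p, q, r) - delta (p, q, r') | p q r r'. p \<in> P \<and> q \<in> Q \<and> r \<in> R \<and> r' \<in> R} \<union>
     {delta (rP b p, q, r) - delta (p, lQ b q, r) | b p q r. b \<in> Bs \<and> p \<in> P \<and> q \<in> Q \<and> r \<in> R} \<union>
     {delta (p, rQ b q, r) - delta (p, q, lR b r) | b p q r. b \<in> Bs \<and> p \<in> P \<and> q \<in> Q \<and> r \<in> R}"

definition teq3 :: "'p::ab_group_add set \<Rightarrow> 'q::ab_group_add set \<Rightarrow> 'r::ab_group_add set \<Rightarrow>
    ('b \<Rightarrow> 'p \<Rightarrow> 'p) \<Rightarrow> ('b \<Rightarrow> 'q \<Rightarrow> 'q) \<Rightarrow> ('b \<Rightarrow> 'q \<Rightarrow> 'q) \<Rightarrow> ('b \<Rightarrow> 'r \<Rightarrow> 'r) \<Rightarrow>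
    'b set \<Rightarrow> ('p \<times> 'q \<times> 'r) list \<Rightarrow> ('p \<times> 'q \<times> 'r) list \<Rightarrow> bool" where
  "teq3 P Q R rP lQ rQ lR Bs L L' \<longleftrightarrow> set L \<subseteq> P \<times> Q \<times> R \<and> set L' \<subseteq> P \<times> Q \<times> R \<and>
     formal L - formal L' \<in> gsub (rel3 P Q R rP lQ rQ lR Bs)"

definition tMA :: "('k, 'x, 'a::ab_group_add, 'b) kdata \<Rightarrow> ('x \<Rightarrow> 'x \<Rightarrow> 'm::ab_group_add set) \<Rightarrow>
    ('x \<Rightarrow> 'x \<Rightarrow> 'x \<Rightarrow> 'm \<Rightarrow> 'a \<Rightarrow> 'm) \<Rightarrow> 'x \<Rightarrow> 'x \<Rightarrow> ('m \<times> 'a) list \<Rightarrow> ('m \<times> 'a) list \<Rightarrow> bool" where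
  "tMA D Mc act x y = teq2 (Mc x x) (Ah D x y) (\<lambda>b m. act x x x m (fi D x b)) (lB D x y) (Bc D x)"

definition tMAA :: "('k, 'x, 'a::ab_group_add, 'b) kdata \<Rightarrow> ('x \<Rightarrow> 'x \<Rightarrow> 'm::ab_group_add set) \<Rightarrow>
    ('x \<Rightarrow> 'x \<Rightarrow> 'x \<Rightarrow> 'm \<Rightarrow> 'a \<Rightarrow> 'm) \<Rightarrow> 'x \<Rightarrow> 'x \<Rightarrow> ('m \<times> 'a \<times> 'a) list \<Rightarrow> ('m \<times> 'a \<times> 'a) list \<Rightarrow> bool" where
  "tMAA D Mc act x y = teq3 (Mc x x) (Ah D x x) (Ah D x y) (\<lambda>b m. act x x x m (fi D x b)) (lB D x x)
      (\<lambda>b a. cmp D x x x a (fi D x b)) (lB D x y) (Bc D x)"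

text \<open>sigma x y m is a representative of sigma_xy(m) = m_<0> \<otimes> m_<1>.\<close>
definition descent :: "('k::comm_ring_1, 'x, 'a::ab_group_add, 'b) kdata \<Rightarrow> ('k \<Rightarrow> 'm::ab_group_add \<Rightarrow> 'm) \<Rightarrow>
    ('x \<Rightarrow> 'x \<Rightarrow> 'm set) \<Rightarrow> ('x \<Rightarrow> 'x \<Rightarrow> 'x \<Rightarrow> 'm \<Rightarrow> 'a \<Rightarrow> 'm) \<Rightarrow> ('x \<Rightarrow> 'x \<Rightarrow> 'm \<Rightarrow> ('m \<times> 'a) list) \<Rightarrow> bool" where
  "descent D sM Mc act \<sigma> \<longleftrightarrow> rmod D sM Mc act \<and>
     (\<forall>x y. \<forall>m\<in>Mc x y. set (\<sigma> x y m) \<subseteq> Mc x x \<times> Ah D x y) \<and>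
     \<comment> \<open>k-linearity of sigma_xy\<close>
     (\<forall>x y. \<forall>m\<in>Mc x y. \<forall>m'\<in>Mc x y. tMA D Mc act x y (\<sigma> x y (m + m')) (\<sigma> x y m @ \<sigma> x y m')) \<and>
     (\<forall>x y c. \<forall>m\<in>Mc x y. tMA D Mc act x y (\<sigma> x y (sM c m)) (map (\<lambda>(p, a). (sM c p, a)) (\<sigma> x y m))) \<and>
     \<comment> \<open>(i)\<close>
     (\<forall>x y z. \<forall>m\<in>Mc x y. \<forall>a\<in>Ah D y z.
        tMA D Mc act x z (\<sigma> x z (act x y z m a)) (map (\<lambda>(p, a'). (p, cmp D x y z a' a)) (\<sigma> x y m))) \<and>
     \<comment> \<open>(ii)\<close>
     (\<forall>x y. \<forall>m\<in>Mc x y.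
        tMAA D Mc act x y (concat (map (\<lambda>(p, a). map (\<lambda>(q, a'). (q, a', a)) (\<sigma> x x p)) (\<sigma> x y m)))
                          (map (\<lambda>(p, a). (p, one D x, a)) (\<sigma> x y m))) \<and>
     \<comment> \<open>(iii)\<close>
     (\<forall>x y. \<forall>m\<in>Mc x y. sum_list (map (\<lambda>(p, a). act x x y p a) (\<sigma> x y m)) = m)"

definition desc_hom :: "('k::comm_ring_1, 'x, 'a::ab_group_add, 'b) kdata \<Rightarrow>
    ('k \<Rightarrow> 'm::ab_group_add \<Rightarrow> 'm) \<Rightarrow> ('x \<Rightarrow> 'x \<Rightarrow> 'm set) \<Rightarrow> ('x \<Rightarrow> 'x \<Rightarrow> 'x \<Rightarrow> 'm \<Rightarrow> 'a \<Rightarrow> 'm) \<Rightarrow> ('x \<Rightarrow> 'x \<Rightarrow> 'm \<Rightarrow> ('m \<times> 'a) list) \<Rightarrow>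
    ('k \<Rightarrow> 'n::ab_group_add \<Rightarrow> 'n) \<Rightarrow> ('x \<Rightarrow> 'x \<Rightarrow> 'n set) \<Rightarrow> ('x \<Rightarrow> 'x \<Rightarrow> 'x \<Rightarrow> 'n \<Rightarrow> 'a \<Rightarrow> 'n) \<Rightarrow> ('x \<Rightarrow> 'x \<Rightarrow> 'n \<Rightarrow> ('n \<times> 'a) list) \<Rightarrow>
    ('x \<Rightarrow> 'x \<Rightarrow> 'm \<Rightarrow> 'n) \<Rightarrow> bool" where
  "desc_hom D sM Mc act \<sigma> sN Nc act' \<sigma>' f \<longleftrightarrow> rmod_hom D sM Mc act sN Nc act' f \<and>
     (\<forall>x y. \<forall>m\<in>Mc x y. tMA D Nc act' x y (map (\<lambda>(p, a). (f x x p, a)) (\<sigma> x y m)) (\<sigma>' x y (f x y m)))"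

text \<open>Two descent data on the same k-module family are the same object of Desc_B(A).\<close>
definition same_desc :: "('k, 'x, 'a::ab_group_add, 'b) kdata \<Rightarrow> ('x \<Rightarrow> 'x \<Rightarrow> 'm::ab_group_add set) \<Rightarrow>
    ('x \<Rightarrow> 'x \<Rightarrow> 'x \<Rightarrow> 'm \<Rightarrow> 'a \<Rightarrow> 'm) \<Rightarrow> ('x \<Rightarrow> 'x \<Rightarrow> 'm \<Rightarrow> ('m \<times> 'a) list) \<Rightarrow>
    ('x \<Rightarrow> 'x \<Rightarrow> 'x \<Rightarrow> 'm \<Rightarrow> 'a \<Rightarrow> 'm) \<Rightarrow> ('x \<Rightarrow> 'x \<Rightarrow> 'm \<Rightarrow> ('m \<times> 'a) list) \<Rightarrow> bool" where
  "same_desc D Mc act \<sigma> act' \<sigma>' \<longleftrightarrow>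
     (\<forall>x y z. \<forall>m\<in>Mc x y. \<forall>a\<in>Ah D y z. act x y z m a = act' x y z m a) \<and>
     (\<forall>x y. \<forall>m\<in>Mc x y. tMA D Mc act x y (\<sigma> x y m) (\<sigma>' x y m))"

text \<open>\<A>^x_yz = _{B_x}Hom(A_xy, A_xz), maps represented extensionally on A_xy.\<close>
definition EndC :: "('k, 'x, 'a::ab_group_add, 'b) kdata \<Rightarrow> 'x \<Rightarrow> 'x \<Rightarrow> 'x \<Rightarrow> ('a \<Rightarrow> 'a) set" where
  "EndC D x y z = {f. f \<in> Ah D x y \<rightarrow> Ah D x z \<and> f \<in> extensional (Ah D x y) \<and>
      (\<forall>a\<in>Ah D x y. \<forall>a'\<in>Ah D x y. f (a + a') = f a + f a') \<and>
      (\<forall>b\<in>Bc D x. \<forall>a\<in>Ah D x y. f (lB D x y b a) = lB D x z b (f a))}"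

definition cadd :: "('k, 'x, 'a::ab_group_add, 'b) kdata \<Rightarrow> 'x \<Rightarrow> 'x \<Rightarrow> ('a \<Rightarrow> 'a) \<Rightarrow> ('a \<Rightarrow> 'a) \<Rightarrow> 'a \<Rightarrow> 'a" where
  "cadd D x y f g = restrict (\<lambda>a. f a + g a) (Ah D x y)"

definition csc :: "('k, 'x, 'a, 'b) kdata \<Rightarrow> 'x \<Rightarrow> 'x \<Rightarrow> 'k \<Rightarrow> ('a \<Rightarrow> 'a) \<Rightarrow> 'a \<Rightarrow> 'a" where
  "csc D x y c f = restrict (\<lambda>a. sA D c (f a)) (Ah D x y)"

text \<open>Multiplication of the cluster: fg = g \<circ> f.\<close>
definition ccomp :: "('k, 'x, 'a, 'b) kdata \<Rightarrow> 'x \<Rightarrow> 'x \<Rightarrow> ('a \<Rightarrow> 'a) \<Rightarrow> ('a \<Rightarrow> 'a) \<Rightarrow> 'a \<Rightarrow> 'a" where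
  "ccomp D x y f g = restrict (g \<circ> f) (Ah D x y)"

definition cunit :: "('k, 'x, 'a, 'b) kdata \<Rightarrow> 'x \<Rightarrow> 'x \<Rightarrow> 'a \<Rightarrow> 'a" where
  "cunit D x y = restrict id (Ah D x y)"

definition rcmod :: "('k::comm_ring_1, 'x, 'a::ab_group_add, 'b) kdata \<Rightarrow> ('k \<Rightarrow> 'm::ab_group_add \<Rightarrow> 'm) \<Rightarrow>
    ('x \<Rightarrow> 'x \<Rightarrow> 'm set) \<Rightarrow> ('x \<Rightarrow> 'x \<Rightarrow> 'x \<Rightarrow> 'm \<Rightarrow> ('a \<Rightarrow> 'a) \<Rightarrow> 'm) \<Rightarrow> bool" where
  "rcmod D sM Mc \<rho> \<longleftrightarrow> module sM \<and> (\<forall>x y. ksubmod sM (Mc x y)) \<and>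
     (\<forall>x y z. \<forall>m\<in>Mc x y. \<forall>f\<in>EndC D x y z. \<rho> x y z m f \<in> Mc x z) \<and>
     (\<forall>x y z. \<forall>m\<in>Mc x y. \<forall>m'\<in>Mc x y. \<forall>f\<in>EndC D x y z.
        \<rho> x y z (m + m') f = \<rho> x y z m f + \<rho> x y z m' f) \<and>
     (\<forall>x y z. \<forall>m\<in>Mc x y. \<forall>f\<in>EndC D x y z. \<forall>g\<in>EndC D x y z.
        \<rho> x y z m (cadd D x y f g) = \<rho> x y z m f + \<rho> x y z m g) \<and>
     (\<forall>x y z c. \<forall>m\<in>Mc x y. \<forall>f\<in>EndC D x y z.
        \<rho> x y z (sM c m) f = sM c (\<rho> x y z m f) \<and> \<rho> x y z m (csc D x y c f) = sM c (\<rho> x y z m f)) \<and>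
     (\<forall>x y z w. \<forall>m\<in>Mc x y. \<forall>f\<in>EndC D x y z. \<forall>g\<in>EndC D x z w.
        \<rho> x z w (\<rho> x y z m f) g = \<rho> x y w m (ccomp D x y f g)) \<and>
     (\<forall>x y. \<forall>m\<in>Mc x y. \<rho> x y y m (cunit D x y) = m)"

definition rcmod_hom :: "('k, 'x, 'a::ab_group_add, 'b) kdata \<Rightarrow>
    ('k \<Rightarrow> 'm::ab_group_add \<Rightarrow> 'm) \<Rightarrow> ('x \<Rightarrow> 'x \<Rightarrow> 'm set) \<Rightarrow> ('x \<Rightarrow> 'x \<Rightarrow> 'x \<Rightarrow> 'm \<Rightarrow> ('a \<Rightarrow> 'a) \<Rightarrow> 'm) \<Rightarrow>
    ('k \<Rightarrow> 'n::ab_group_add \<Rightarrow> 'n) \<Rightarrow> ('x \<Rightarrow> 'x \<Rightarrow> 'n set) \<Rightarrow> ('x \<Rightarrow> 'x \<Rightarrow> 'x \<Rightarrow> 'n \<Rightarrow> ('a \<Rightarrow> 'a) \<Rightarrow> 'n) \<Rightarrow>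
    ('x \<Rightarrow> 'x \<Rightarrow> 'm \<Rightarrow> 'n) \<Rightarrow> bool" where
  "rcmod_hom D sM Mc \<rho> sN Nc \<rho>' \<phi> \<longleftrightarrow> klin_fam sM Mc sN Nc \<phi> \<and>
     (\<forall>x y z. \<forall>m\<in>Mc x y. \<forall>f\<in>EndC D x y z. \<phi> x z (\<rho> x y z m f) = \<rho>' x y z (\<phi> x y m) f)"

text \<open>Two right \<A>-module structures on the same family are the same object of M_\<A>.\<close>
definition same_cmod :: "('k, 'x, 'a::ab_group_add, 'b) kdata \<Rightarrow> ('x \<Rightarrow> 'x \<Rightarrow> 'm set) \<Rightarrow>
    ('x \<Rightarrow> 'x \<Rightarrow> 'x \<Rightarrow> 'm \<Rightarrow> ('a \<Rightarrow> 'a) \<Rightarrow> 'm) \<Rightarrow> ('x \<Rightarrow> 'x \<Rightarrow> 'x \<Rightarrow> 'm \<Rightarrow> ('a \<Rightarrow> 'a) \<Rightarrow> 'm) \<Rightarrow> bool" where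
  "same_cmod D Mc \<rho> \<rho>' \<longleftrightarrow> (\<forall>x y z. \<forall>m\<in>Mc x y. \<forall>f\<in>EndC D x y z. \<rho> x y z m f = \<rho>' x y z m f)"

definition desc_action :: "('x \<Rightarrow> 'x \<Rightarrow> 'x \<Rightarrow> 'm::ab_group_add \<Rightarrow> 'a \<Rightarrow> 'm) \<Rightarrow> ('x \<Rightarrow> 'x \<Rightarrow> 'm \<Rightarrow> ('m \<times> 'a) list) \<Rightarrow>
    'x \<Rightarrow> 'x \<Rightarrow> 'x \<Rightarrow> 'm \<Rightarrow> ('a \<Rightarrow> 'a) \<Rightarrow> 'm" where
  "desc_action act \<sigma> x y z m f = sum_list (map (\<lambda>(p, a). act x x z p (f a)) (\<sigma> x y m))"

end

theory Submission
  imports Defs "HOL-Library.Multiset"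
begin


definition geq :: "('z \<Rightarrow> int) set \<Rightarrow> 'z list \<Rightarrow> 'z list \<Rightarrow> bool" where
  "geq G L L' \<longleftrightarrow> formal L - formal L' \<in> gsub G"

lemma formal_Nil[simp]: "formal [] = 0" by (simp add: formal_def)
lemma formal_Cons[simp]: "formal (x # L) = delta x + formal L" by (simp add: formal_def)
lemma formal_append[simp]: "formal (L @ L') = formal L + formal L'" by (simp add: formal_def)

lemma formal_count: "formal L z = int (count (mset L) z)"
  by (induction L) (auto simp: delta_def)

lemma formal_eq_iff: "formal L = formal L' \<longleftrightarrow> mset L = mset L'"
proof
  assume "formal L = formal L'"
  then show "mset L = mset L'"
    by (metis multiset_eqI formal_count of_nat_eq_iff)
next
  assume "mset L = mset L'" then show "formal L = formal L'"
    by (simp add: fun_eq_iff formal_count)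
qed

lemma gsub_uminus: "u \<in> gsub G \<Longrightarrow> - u \<in> gsub G"
  using gsub_diff[OF gsub_zero, of u] by simp
lemma gsub_add: "u \<in> gsub G \<Longrightarrow> v \<in> gsub G \<Longrightarrow> u + v \<in> gsub G"
  using gsub_diff[OF _ gsub_uminus, of u G v] by simp

lemma geq_refl: "geq G L L" by (simp add: geq_def gsub_zero)
lemma geq_sym: "geq G L L' \<Longrightarrow> geq G L' L"
  unfolding geq_def using gsub_uminus by fastforce
lemma geq_trans: "geq G L L' \<Longrightarrow> geq G L' L'' \<Longrightarrow> geq G L L''"
  unfolding geq_def using gsub_add by fastforce
lemma geq_append: "geq G L1 L1' \<Longrightarrow> geq G L2 L2' \<Longrightarrow> geq G (L1 @ L2) (L1' @ L2')"
  unfolding geq_def using gsub_add by (fastforce simp: algebra_simps)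
lemma geq_mset: "mset L = mset L' \<Longrightarrow> geq G L L'"
  unfolding geq_def by (simp add: formal_eq_iff[symmetric] gsub_zero)
lemma geq_gen2: "delta a - delta b \<in> G \<Longrightarrow> geq G [a] [b]"
  unfolding geq_def by (simp add: gsub_gen)
lemma geq_gen3: "delta a - delta b - delta c \<in> G \<Longrightarrow> geq G [a] [b, c]"
  unfolding geq_def by (auto simp: algebra_simps dest: gsub_gen)
lemma geq_concat: "(\<And>i. i \<in> set I \<Longrightarrow> geq G (f i) (g i)) \<Longrightarrow>
    geq G (concat (map f I)) (concat (map g I))"
  by (induction I) (auto intro: geq_append geq_refl)

lemma gsub_rep:
  assumes "u \<in> gsub G"
    and gen: "\<And>g. g \<in> G \<Longrightarrow> \<exists>Lp Ln. g = formal Lp - formal Ln \<and> Q Lp Ln"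
    and nil: "Q [] []"
    and comb: "\<And>a b c d. Q a b \<Longrightarrow> Q c d \<Longrightarrow> Q (a @ d) (b @ c)"
  shows "\<exists>Lp Ln. u = formal Lp - formal Ln \<and> Q Lp Ln"
  using assms(1)
proof induction
  case gsub_zero then show ?case using nil by (intro exI[of _ "[]"]) auto
next
  case (gsub_gen g) then show ?case using gen by blast
next
  case (gsub_diff u v)
  then obtain a b c d where "u = formal a - formal b" "Q a b" "v = formal c - formal d" "Q c d" by blast
  then have "u - v = formal (a @ d) - formal (b @ c)" by (simp add: fun_eq_iff)
  then show ?case using comb[OF \<open>Q a b\<close> \<open>Q c d\<close>] by blast
qed

lemma geq_rep:
  assumes "geq G L L'"
    and gen: "\<And>g. g \<in> G \<Longrightarrow> \<exists>Lp Ln. g = formal Lp - formal Ln \<and> Q Lp Ln"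
    and nil: "Q [] []"
    and comb: "\<And>a b c d. Q a b \<Longrightarrow> Q c d \<Longrightarrow> Q (a @ d) (b @ c)"
  shows "\<exists>Lp Ln. mset (L @ Ln) = mset (L' @ Lp) \<and> Q Lp Ln"
proof -
  obtain Lp Ln where "formal L - formal L' = formal Lp - formal Ln" "Q Lp Ln"
    using gsub_rep[OF assms(1)[unfolded geq_def] gen nil comb] by blast
  then have "formal (L @ Ln) = formal (L' @ Lp)" by (simp add: algebra_simps)
  then show ?thesis using \<open>Q Lp Ln\<close> formal_eq_iff by blast
qed

lemma sum_list_map_mset: "mset A = mset B \<Longrightarrow> sum_list (map (\<phi>::_\<Rightarrow>'m::comm_monoid_add) A) = sum_list (map \<phi> B)"
  by (metis mset_map sum_mset_sum_list)

lemma geq_eval: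
  fixes \<phi> :: "'z \<Rightarrow> 'm::ab_group_add"
  assumes "geq G L L'"
    and gen: "\<And>g. g \<in> G \<Longrightarrow> \<exists>Lp Ln. g = formal Lp - formal Ln \<and> sum_list (map \<phi> Lp) = sum_list (map \<phi> Ln)"
  shows "sum_list (map \<phi> L) = sum_list (map \<phi> L')"
proof -
  obtain Lp Ln where m: "mset (L @ Ln) = mset (L' @ Lp)" and e: "sum_list (map \<phi> Lp) = sum_list (map \<phi> Ln)"
    using geq_rep[where Q="\<lambda>Lp Ln. sum_list (map \<phi> Lp) = sum_list (map \<phi> Ln)", OF assms(1) gen] by auto
  from sum_list_map_mset[OF m, of \<phi>] e show ?thesis by simp
qed

lemma geq_map:
  assumes "geq G L L'"
    and gen: "\<And>g. g \<in> G \<Longrightarrow> \<exists>Lp Ln. g = formal Lp - formal Ln \<and> geq G' (map h Lp) (map h Ln)"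
  shows "geq G' (map h L) (map h L')"
proof -
  obtain Lp Ln where m: "mset (L @ Ln) = mset (L' @ Lp)" and e: "geq G' (map h Lp) (map h Ln)"
    using geq_rep[where Q="\<lambda>Lp Ln. geq G' (map h Lp) (map h Ln)", OF assms(1) gen]
    by (auto intro: geq_refl dest: geq_append[OF _ geq_sym])
  have "mset (map h L @ map h Ln) = mset (map h L' @ map h Lp)"
    using m by (metis map_append mset_map)
  then have "geq G' (map h L @ map h Ln) (map h L' @ map h Lp)" by (rule geq_mset)
  then have "geq G' (map h L @ map h Ln) (map h L' @ map h Ln)"
    by (rule geq_trans) (rule geq_append[OF geq_refl e])
  then show ?thesis unfolding geq_def by (simp add: algebra_simps)
qed



lemma add_hom_sum:
  fixes h :: "'u::ab_group_add \<Rightarrow> 'v::ab_group_add" and n :: nat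
  assumes S0: "0 \<in> S" and Sadd: "\<And>u v. u \<in> S \<Longrightarrow> v \<in> S \<Longrightarrow> u + v \<in> S"
    and hadd: "\<And>u v. u \<in> S \<Longrightarrow> v \<in> S \<Longrightarrow> h (u + v) = h u + h v"
    and g: "\<And>j. j < n \<Longrightarrow> g j \<in> S"
  shows "h (\<Sum>j<n. g j) = (\<Sum>j<n. h (g j))"
proof -
  have h0: "h 0 = 0" using hadd[OF S0 S0] by simp
  have "(\<forall>j<n. g j \<in> S) \<longrightarrow> (\<Sum>j<n. g j) \<in> S \<and> h (\<Sum>j<n. g j) = (\<Sum>j<n. h (g j))"
    by (induction n) (auto simp: S0 h0 Sadd hadd)
  then show ?thesis using g by blast
qed

lemma add_sum_closed:
  fixes n :: nat and g :: "nat \<Rightarrow> 'u::ab_group_add"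
  assumes S0: "0 \<in> S" and Sadd: "\<And>u v. u \<in> S \<Longrightarrow> v \<in> S \<Longrightarrow> u + v \<in> S"
    and g: "\<And>j. j < n \<Longrightarrow> g j \<in> S"
  shows "(\<Sum>j<n. g j) \<in> S"
proof -
  have "(\<forall>j<n. g j \<in> S) \<longrightarrow> (\<Sum>j<n. g j) \<in> S"
    by (induction n) (auto simp: S0 Sadd)
  then show ?thesis using g by blast
qed

lemma add_hom_sum_list:
  fixes h :: "'u::ab_group_add \<Rightarrow> 'v::ab_group_add"
  assumes S0: "0 \<in> S" and Sadd: "\<And>u v. u \<in> S \<Longrightarrow> v \<in> S \<Longrightarrow> u + v \<in> S"
    and hadd: "\<And>u v. u \<in> S \<Longrightarrow> v \<in> S \<Longrightarrow> h (u + v) = h u + h v"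
    and g: "\<And>l. l \<in> set L \<Longrightarrow> g l \<in> S"
  shows "h (sum_list (map g L)) = sum_list (map (\<lambda>l. h (g l)) L)"
proof -
  have h0: "h 0 = 0" using hadd[OF S0 S0] by simp
  have "(\<forall>l\<in>set L. g l \<in> S) \<longrightarrow> sum_list (map g L) \<in> S \<and> h (sum_list (map g L)) = sum_list (map (\<lambda>l. h (g l)) L)"
    by (induction L) (auto simp: S0 h0 Sadd hadd)
  then show ?thesis using g by blast
qed

lemma add_sum_list_closed:
  assumes S0: "0 \<in> S" and Sadd: "\<And>u v. u \<in> S \<Longrightarrow> v \<in> S \<Longrightarrow> u + v \<in> S"
    and g: "\<And>l. l \<in> set L \<Longrightarrow> g l \<in> S"
  shows "sum_list (map g L) \<in> S"
proof -
  have "(\<forall>l\<in>set L. g l \<in> S) \<longrightarrow> sum_list (map g L) \<in> S"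
    by (induction L) (auto simp: S0 Sadd)
  then show ?thesis using g by blast
qed

locale ctx =
  fixes D :: "('k::comm_ring_1, 'x, 'a::ab_group_add, 'b::ab_group_add) kdata"
    and N :: "'x \<Rightarrow> 'x \<Rightarrow> nat" and E :: "'x \<Rightarrow> 'x \<Rightarrow> nat \<Rightarrow> 'a" and Ph :: "'x \<Rightarrow> 'x \<Rightarrow> nat \<Rightarrow> 'a \<Rightarrow> 'b"
  assumes cat: "klin_cat D" and dg: "diag_cat D" and xf: "xfunctor D"
    and E_in: "\<And>x y j. j < N x y \<Longrightarrow> E x y j \<in> Ah D x y"
    and Ph_dual: "\<And>x y j. j < N x y \<Longrightarrow> Blin_dual D x y (Ph x y j)"
    and decomp: "\<And>x y a. a \<in> Ah D x y \<Longrightarrow> a = (\<Sum>j<N x y. lB D x y (Ph x y j a) (E x y j))"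
begin

lemma A0: "0 \<in> Ah D x y" using cat by (simp add: klin_cat_def ksubmod_def)
lemma Aadd: "a \<in> Ah D x y \<Longrightarrow> a' \<in> Ah D x y \<Longrightarrow> a + a' \<in> Ah D x y"
  using cat by (simp add: klin_cat_def ksubmod_def)
lemma Ascale: "a \<in> Ah D x y \<Longrightarrow> sA D c a \<in> Ah D x y"
  using cat by (simp add: klin_cat_def ksubmod_def)
lemma cmp_in: "a \<in> Ah D x y \<Longrightarrow> b \<in> Ah D y z \<Longrightarrow> cmp D x y z a b \<in> Ah D x z"
  using cat by (simp add: klin_cat_def)
lemma cmp_addL: "a \<in> Ah D x y \<Longrightarrow> a' \<in> Ah D x y \<Longrightarrow> b \<in> Ah D y z \<Longrightarrow>
   cmp D x y z (a + a') b = cmp D x y z a b + cmp D x y z a' b"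
  using cat by (simp add: klin_cat_def)
lemma cmp_addR: "a \<in> Ah D x y \<Longrightarrow> b \<in> Ah D y z \<Longrightarrow> b' \<in> Ah D y z \<Longrightarrow>
   cmp D x y z a (b + b') = cmp D x y z a b + cmp D x y z a b'"
  using cat by (simp add: klin_cat_def)
lemma cmp_scaleR: "a \<in> Ah D x y \<Longrightarrow> b \<in> Ah D y z \<Longrightarrow>
   cmp D x y z a (sA D c b) = sA D c (cmp D x y z a b)"
  using cat by (simp add: klin_cat_def)
lemma cmp_assoc: "a \<in> Ah D x y \<Longrightarrow> b \<in> Ah D y z \<Longrightarrow> c \<in> Ah D z w \<Longrightarrow>
   cmp D x z w (cmp D x y z a b) c = cmp D x y w a (cmp D y z w b c)"
  using cat by (simp add: klin_cat_def)
lemma one_in: "one D x \<in> Ah D x x" using cat by (simp add: klin_cat_def)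
lemma cmp_oneL: "a \<in> Ah D x y \<Longrightarrow> cmp D x x y (one D x) a = a" using cat by (simp add: klin_cat_def)
lemma cmp_oneR: "a \<in> Ah D x y \<Longrightarrow> cmp D x y y a (one D y) = a" using cat by (simp add: klin_cat_def)

lemma B0: "0 \<in> Bc D x" using dg by (simp add: diag_cat_def ksubmod_def)
lemma Badd: "a \<in> Bc D x \<Longrightarrow> a' \<in> Bc D x \<Longrightarrow> a + a' \<in> Bc D x"
  using dg by (simp add: diag_cat_def ksubmod_def)
lemma bm_in: "a \<in> Bc D x \<Longrightarrow> b \<in> Bc D x \<Longrightarrow> bm D x a b \<in> Bc D x"
  using dg by (simp add: diag_cat_def)

lemma fi_in: "b \<in> Bc D x \<Longrightarrow> fi D x b \<in> Ah D x x" using xf by (simp add: xfunctor_def)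
lemma fi_add: "b \<in> Bc D x \<Longrightarrow> b' \<in> Bc D x \<Longrightarrow> fi D x (b + b') = fi D x b + fi D x b'"
  using xf by (simp add: xfunctor_def)
lemma fi_mult: "b \<in> Bc D x \<Longrightarrow> b' \<in> Bc D x \<Longrightarrow> fi D x (bm D x b b') = cmp D x x x (fi D x b) (fi D x b')"
  using xf by (simp add: xfunctor_def)

lemma Ph_in: "j < N x y \<Longrightarrow> a \<in> Ah D x y \<Longrightarrow> Ph x y j a \<in> Bc D x"
  using Ph_dual by (simp add: Blin_dual_def)
lemma Ph_add: "j < N x y \<Longrightarrow> a \<in> Ah D x y \<Longrightarrow> a' \<in> Ah D x y \<Longrightarrow> Ph x y j (a + a') = Ph x y j a + Ph x y j a'"
  using Ph_dual by (simp add: Blin_dual_def)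
lemma Ph_lin: "j < N x y \<Longrightarrow> b \<in> Bc D x \<Longrightarrow> a \<in> Ah D x y \<Longrightarrow> Ph x y j (lB D x y b a) = bm D x b (Ph x y j a)"
  using Ph_dual by (simp add: Blin_dual_def)

lemma lB_in: "b \<in> Bc D x \<Longrightarrow> a \<in> Ah D x y \<Longrightarrow> lB D x y b a \<in> Ah D x y"
  by (simp add: lB_def cmp_in fi_in)

lemma cmp_sumL: "(\<And>j. j < (n::nat) \<Longrightarrow> g j \<in> Ah D x y) \<Longrightarrow> b \<in> Ah D y z \<Longrightarrow>
   cmp D x y z (\<Sum>j<n. g j) b = (\<Sum>j<n. cmp D x y z (g j) b)"
  by (rule add_hom_sum[where S="Ah D x y"]) (auto simp: A0 Aadd cmp_addL)
lemma A_sum: "(\<And>j. j < (n::nat) \<Longrightarrow> g j \<in> Ah D x y) \<Longrightarrow> (\<Sum>j<n. g j) \<in> Ah D x y"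
  by (rule add_sum_closed[where S="Ah D x y"]) (auto simp: A0 Aadd)
lemma B_sum: "(\<And>j. j < (n::nat) \<Longrightarrow> g j \<in> Bc D x) \<Longrightarrow> (\<Sum>j<n. g j) \<in> Bc D x"
  by (rule add_sum_closed[where S="Bc D x"]) (auto simp: B0 Badd)
lemma fi_sum: "(\<And>j. j < (n::nat) \<Longrightarrow> g j \<in> Bc D x) \<Longrightarrow> fi D x (\<Sum>j<n. g j) = (\<Sum>j<n. fi D x (g j))"
  by (rule add_hom_sum[where S="Bc D x"]) (auto simp: B0 Badd fi_add)
lemma Ph_sum: "k < N x y \<Longrightarrow> (\<And>j. j < (n::nat) \<Longrightarrow> g j \<in> Ah D x y) \<Longrightarrow> Ph x y k (\<Sum>j<n. g j) = (\<Sum>j<n. Ph x y k (g j))"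
  by (rule add_hom_sum[where S="Ah D x y"]) (auto simp: A0 Aadd Ph_add)

end


context ctx begin

definition dual :: "'x \<Rightarrow> 'x \<Rightarrow> nat \<Rightarrow> 'a \<Rightarrow> 'a" where
  "dual x y j = restrict (\<lambda>c. fi D x (Ph x y j c)) (Ah D x y)"
definition rmul :: "'x \<Rightarrow> 'x \<Rightarrow> 'x \<Rightarrow> 'a \<Rightarrow> 'a \<Rightarrow> 'a" where
  "rmul x y z a = restrict (\<lambda>c. cmp D x y z c a) (Ah D x y)"

lemma End_in: "f \<in> EndC D x y z \<Longrightarrow> a \<in> Ah D x y \<Longrightarrow> f a \<in> Ah D x z"
  by (auto simp: EndC_def)
lemma End_add: "f \<in> EndC D x y z \<Longrightarrow> a \<in> Ah D x y \<Longrightarrow> a' \<in> Ah D x y \<Longrightarrow> f (a + a') = f a + f a'"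
  by (auto simp: EndC_def)
lemma End_lin: "f \<in> EndC D x y z \<Longrightarrow> b \<in> Bc D x \<Longrightarrow> a \<in> Ah D x y \<Longrightarrow> f (lB D x y b a) = lB D x z b (f a)"
  by (auto simp: EndC_def)
lemma End_ext: "f \<in> EndC D x y z \<Longrightarrow> a \<notin> Ah D x y \<Longrightarrow> f a = undefined"
  by (auto simp: EndC_def extensional_def)
lemma End_sum: "f \<in> EndC D x y z \<Longrightarrow> (\<And>j. j < (n::nat) \<Longrightarrow> g j \<in> Ah D x y) \<Longrightarrow>
    f (\<Sum>j<n. g j) = (\<Sum>j<n. f (g j))"
  by (rule add_hom_sum[where S="Ah D x y"]) (auto simp: A0 Aadd End_add)

lemma dual_app: "c \<in> Ah D x y \<Longrightarrow> dual x y j c = fi D x (Ph x y j c)" by (simp add: dual_def)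
lemma rmul_app: "c \<in> Ah D x y \<Longrightarrow> rmul x y z a c = cmp D x y z c a" by (simp add: rmul_def)

lemma dual_End: "j < N x y \<Longrightarrow> dual x y j \<in> EndC D x y x"
  unfolding EndC_def
proof (intro CollectI conjI ballI)
  assume j: "j < N x y"
  show "dual x y j \<in> Ah D x y \<rightarrow> Ah D x x" using j by (auto simp: dual_def fi_in Ph_in)
  show "dual x y j \<in> extensional (Ah D x y)" by (simp add: dual_def)
  fix a a' assume "a \<in> Ah D x y" "a' \<in> Ah D x y"
  then show "dual x y j (a + a') = dual x y j a + dual x y j a'"
    using j by (simp add: dual_def Aadd Ph_add fi_add Ph_in)
next
  fix b a assume j: "j < N x y" and b: "b \<in> Bc D x" and a: "a \<in> Ah D x y"
  then show "dual x y j (lB D x y b a) = lB D x x b (dual x y j a)"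
    by (simp add: dual_def lB_in Ph_lin fi_mult Ph_in) (simp add: lB_def)
qed

lemma rmul_End: "a \<in> Ah D y z \<Longrightarrow> rmul x y z a \<in> EndC D x y z"
  unfolding EndC_def
proof (intro CollectI conjI ballI)
  assume a: "a \<in> Ah D y z"
  show "rmul x y z a \<in> Ah D x y \<rightarrow> Ah D x z" using a by (auto simp: rmul_def cmp_in)
  show "rmul x y z a \<in> extensional (Ah D x y)" by (simp add: rmul_def)
  fix c c' assume "c \<in> Ah D x y" "c' \<in> Ah D x y"
  then show "rmul x y z a (c + c') = rmul x y z a c + rmul x y z a c'"
    using a by (simp add: rmul_def Aadd cmp_addL)
next
  fix b c assume a: "a \<in> Ah D y z" and b: "b \<in> Bc D x" and c: "c \<in> Ah D x y"
  then show "rmul x y z a (lB D x y b c) = lB D x z b (rmul x y z a c)"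
    by (simp add: rmul_def lB_in) (simp add: lB_def cmp_assoc fi_in)
qed

lemma cmp_zeroR: "a \<in> Ah D x y \<Longrightarrow> cmp D x y z a 0 = 0"
  using cmp_addR[OF _ A0 A0, of a x y z] by simp

lemma zero_End: "restrict (\<lambda>c. 0::'a) (Ah D x y) \<in> EndC D x y z"
  unfolding EndC_def
proof (intro CollectI conjI ballI)
  show "restrict (\<lambda>c. 0::'a) (Ah D x y) \<in> Ah D x y \<rightarrow> Ah D x z" by (simp add: A0)
  show "restrict (\<lambda>c. 0::'a) (Ah D x y) \<in> extensional (Ah D x y)" by simp
  fix a a' assume "a \<in> Ah D x y" "a' \<in> Ah D x y"
  then show "restrict (\<lambda>c. 0::'a) (Ah D x y) (a + a') = restrict (\<lambda>c. 0::'a) (Ah D x y) a + restrict (\<lambda>c. 0::'a) (Ah D x y) a'"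
    by (simp add: Aadd)
next
  fix b a assume "b \<in> Bc D x" "a \<in> Ah D x y"
  then show "restrict (\<lambda>c. 0::'a) (Ah D x y) (lB D x y b a) = lB D x z b (restrict (\<lambda>c. 0::'a) (Ah D x y) a)"
    by (simp add: lB_in) (simp add: lB_def cmp_zeroR fi_in)
qed

lemma cadd_End: assumes f: "f \<in> EndC D x y z" and g: "g \<in> EndC D x y z"
  shows "cadd D x y f g \<in> EndC D x y z"
  unfolding EndC_def
proof (intro CollectI conjI ballI)
  show "cadd D x y f g \<in> Ah D x y \<rightarrow> Ah D x z" using f g by (auto simp: cadd_def Aadd End_in)
  show "cadd D x y f g \<in> extensional (Ah D x y)" by (simp add: cadd_def)
  fix a a' assume a: "a \<in> Ah D x y" "a' \<in> Ah D x y"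
  then show "cadd D x y f g (a + a') = cadd D x y f g a + cadd D x y f g a'"
    using End_add[OF f a] End_add[OF g a] by (simp add: cadd_def Aadd algebra_simps)
next
  fix b a assume b: "b \<in> Bc D x" and a: "a \<in> Ah D x y"
  then show "cadd D x y f g (lB D x y b a) = lB D x z b (cadd D x y f g a)"
    using End_lin[OF f b a] End_lin[OF g b a]
    by (simp add: cadd_def lB_in) (simp add: lB_def cmp_addR fi_in End_in[OF f a] End_in[OF g a])
qed

definition zmap :: "'x \<Rightarrow> 'x \<Rightarrow> 'a \<Rightarrow> 'a" where
  "zmap x y = restrict (\<lambda>c. 0) (Ah D x y)"
definition rsum :: "'x \<Rightarrow> 'x \<Rightarrow> (nat \<Rightarrow> 'a \<Rightarrow> 'a) \<Rightarrow> nat \<Rightarrow> 'a \<Rightarrow> 'a" where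
  "rsum x y F n = restrict (\<lambda>c. \<Sum>j<n. F j c) (Ah D x y)"

lemma rsum_0: "rsum x y F 0 = zmap x y" by (simp add: rsum_def zmap_def)
lemma rsum_Suc: "rsum x y F (Suc n) = cadd D x y (rsum x y F n) (F n)"
  by (auto simp: rsum_def cadd_def fun_eq_iff)
lemma zmap_End: "zmap x y \<in> EndC D x y z" unfolding zmap_def by (rule zero_End)

lemma rsum_End: "(\<And>j. j < (n::nat) \<Longrightarrow> F j \<in> EndC D x y z) \<Longrightarrow> rsum x y F n \<in> EndC D x y z"
  by (induction n) (auto simp: rsum_0 rsum_Suc zmap_End cadd_End)

lemma End_recon: assumes f: "f \<in> EndC D x y z"
  shows "f = restrict (\<lambda>c. \<Sum>j<N x y. cmp D x x z (fi D x (Ph x y j c)) (f (E x y j))) (Ah D x y)"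
proof
  fix c show "f c = restrict (\<lambda>c. \<Sum>j<N x y. cmp D x x z (fi D x (Ph x y j c)) (f (E x y j))) (Ah D x y) c"
  proof (cases "c \<in> Ah D x y")
    case True
    have "f c = f (\<Sum>j<N x y. lB D x y (Ph x y j c) (E x y j))" using decomp[OF True] by simp
    also have "\<dots> = (\<Sum>j<N x y. f (lB D x y (Ph x y j c) (E x y j)))"
      by (rule End_sum[OF f]) (simp add: lB_in Ph_in E_in True)
    also have "\<dots> = (\<Sum>j<N x y. cmp D x x z (fi D x (Ph x y j c)) (f (E x y j)))"
      apply (rule sum.cong, simp)
      subgoal for j using End_lin[OF f Ph_in[OF _ True] E_in, of j] by (simp add: lB_def)
      done
    finally show ?thesis using True by simp
  next
    case False then show ?thesis using End_ext[OF f] by simp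
  qed
qed

lemma rcmod_props:
  assumes "rcmod D sM Mc \<rho>"
  shows "module sM" and "ksubmod sM (Mc x y)"
    and "m \<in> Mc x y \<Longrightarrow> f \<in> EndC D x y z \<Longrightarrow> \<rho> x y z m f \<in> Mc x z"
    and "m \<in> Mc x y \<Longrightarrow> m' \<in> Mc x y \<Longrightarrow> f \<in> EndC D x y z \<Longrightarrow> \<rho> x y z (m + m') f = \<rho> x y z m f + \<rho> x y z m' f"
    and "m \<in> Mc x y \<Longrightarrow> f \<in> EndC D x y z \<Longrightarrow> g \<in> EndC D x y z \<Longrightarrow> \<rho> x y z m (cadd D x y f g) = \<rho> x y z m f + \<rho> x y z m g"
    and "m \<in> Mc x y \<Longrightarrow> f \<in> EndC D x y z \<Longrightarrow> \<rho> x y z (sM c m) f = sM c (\<rho> x y z m f)"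
    and "m \<in> Mc x y \<Longrightarrow> f \<in> EndC D x y z \<Longrightarrow> \<rho> x y z m (csc D x y c f) = sM c (\<rho> x y z m f)"
    and "m \<in> Mc x y \<Longrightarrow> f \<in> EndC D x y z \<Longrightarrow> g \<in> EndC D x z w \<Longrightarrow> \<rho> x z w (\<rho> x y z m f) g = \<rho> x y w m (ccomp D x y f g)"
    and "m \<in> Mc x y \<Longrightarrow> \<rho> x y y m (cunit D x y) = m"
  using assms unfolding rcmod_def by (simp_all (no_asm_simp))

lemma rho_zmap: assumes r: "rcmod D sM Mc \<rho>" and m: "m \<in> Mc x y"
  shows "\<rho> x y z m (zmap x y) = 0"
proof -
  have "cadd D x y (zmap x y) (zmap x y) = zmap x y" by (auto simp: cadd_def zmap_def fun_eq_iff)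
  then have "\<rho> x y z m (zmap x y) = \<rho> x y z m (zmap x y) + \<rho> x y z m (zmap x y)"
    using rcmod_props(5)[OF r m zmap_End zmap_End] by simp
  then show ?thesis by simp
qed

lemma rho_sum:
  assumes r: "rcmod D sM Mc \<rho>" and m: "m \<in> Mc x y" and F: "\<And>j. j < (n::nat) \<Longrightarrow> F j \<in> EndC D x y z"
  shows "\<rho> x y z m (rsum x y F n) = (\<Sum>j<n. \<rho> x y z m (F j))"
  using F
  by (induction n) (auto simp: rsum_0 rsum_Suc rho_zmap[OF r m] rcmod_props(5)[OF r m] rsum_End)

end


lemma teq2_iff: "teq2 P Q rP lQ Bs L L' \<longleftrightarrow> set L \<subseteq> P \<times> Q \<and> set L' \<subseteq> P \<times> Q \<and> geq (rel2 P Q rP lQ Bs) L L'"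
  by (simp add: teq2_def geq_def)

lemma teq2_refl: "set L \<subseteq> P \<times> Q \<Longrightarrow> teq2 P Q rP lQ Bs L L"
  by (simp add: teq2_iff geq_refl)
lemma teq2_sym: "teq2 P Q rP lQ Bs L L' \<Longrightarrow> teq2 P Q rP lQ Bs L' L"
  by (simp add: teq2_iff geq_sym)
lemma teq2_trans: "teq2 P Q rP lQ Bs L L' \<Longrightarrow> teq2 P Q rP lQ Bs L' L'' \<Longrightarrow> teq2 P Q rP lQ Bs L L''"
  by (auto simp: teq2_iff intro: geq_trans)
lemma teq2_append: "teq2 P Q rP lQ Bs L1 L1' \<Longrightarrow> teq2 P Q rP lQ Bs L2 L2' \<Longrightarrow>
    teq2 P Q rP lQ Bs (L1 @ L2) (L1' @ L2')"
  by (auto simp: teq2_iff intro: geq_append)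
lemma teq2_concat: "(\<And>i. i \<in> set I \<Longrightarrow> teq2 P Q rP lQ Bs (f i) (g i)) \<Longrightarrow>
    teq2 P Q rP lQ Bs (concat (map f I)) (concat (map g I))"
  by (induction I) (auto intro: teq2_append teq2_refl)
lemma teq2_mset: "mset L = mset L' \<Longrightarrow> set L \<subseteq> P \<times> Q \<Longrightarrow> teq2 P Q rP lQ Bs L L'"
  by (auto simp: teq2_iff intro: geq_mset dest: mset_eq_setD)

lemma teq2_addL: "p \<in> P \<Longrightarrow> p' \<in> P \<Longrightarrow> q \<in> Q \<Longrightarrow> p + p' \<in> P \<Longrightarrow>
    teq2 P Q rP lQ Bs [(p + p', q)] [(p, q), (p', q)]"
  unfolding teq2_iff by (auto intro!: geq_gen3 simp: rel2_def)
lemma teq2_addR: "p \<in> P \<Longrightarrow> q \<in> Q \<Longrightarrow> q' \<in> Q \<Longrightarrow> q + q' \<in> Q \<Longrightarrow>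
    teq2 P Q rP lQ Bs [(p, q + q')] [(p, q), (p, q')]"
  unfolding teq2_iff by (auto intro!: geq_gen3 simp: rel2_def)
lemma teq2_bal: "b \<in> Bs \<Longrightarrow> p \<in> P \<Longrightarrow> q \<in> Q \<Longrightarrow> rP b p \<in> P \<Longrightarrow> lQ b q \<in> Q \<Longrightarrow>
    teq2 P Q rP lQ Bs [(rP b p, q)] [(p, lQ b q)]"
  unfolding teq2_iff by (auto intro!: geq_gen2 simp: rel2_def)

lemma teq2_zeroR: assumes "p \<in> P" "(0::'q::ab_group_add) \<in> Q"
  shows "teq2 P Q rP lQ Bs [(p, 0::'q)] []"
proof -
  have "teq2 P Q rP lQ Bs [(p, 0 + 0)] [(p, 0), (p, 0)]" using assms by (intro teq2_addR) auto
  then show ?thesis using assms unfolding teq2_iff geq_def by (auto simp: algebra_simps dest: gsub_uminus)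
qed
lemma teq2_zeroL: assumes "(0::'p::ab_group_add) \<in> P" "q \<in> Q"
  shows "teq2 P Q rP lQ Bs [(0::'p, q)] []"
proof -
  have "teq2 P Q rP lQ Bs [(0 + 0, q)] [(0, q), (0, q)]" using assms by (intro teq2_addL) auto
  then show ?thesis using assms unfolding teq2_iff geq_def by (auto simp: algebra_simps dest: gsub_uminus)
qed

lemma teq2_sumR:
  fixes h :: "nat \<Rightarrow> 'q::ab_group_add"
  assumes p: "p \<in> P" and Q0: "0 \<in> Q" and Qadd: "\<And>u v. u \<in> Q \<Longrightarrow> v \<in> Q \<Longrightarrow> u + v \<in> Q"
    and h: "\<And>j. j < n \<Longrightarrow> h j \<in> Q"
  shows "teq2 P Q rP lQ Bs [(p, \<Sum>j<n. h j)] (map (\<lambda>j. (p, h j)) [0..<n])"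
  using h
proof (induction n)
  case 0 then show ?case using teq2_zeroR[OF p Q0] by simp
next
  case (Suc n)
  have S: "(\<Sum>j<n. h j) \<in> Q" using Suc.prems by (induction n) (auto simp: Q0 Qadd)
  have "teq2 P Q rP lQ Bs [(p, (\<Sum>j<n. h j) + h n)] [(p, \<Sum>j<n. h j), (p, h n)]"
    using Suc.prems S p by (intro teq2_addR) (auto simp: Qadd)
  moreover have "teq2 P Q rP lQ Bs ([(p, \<Sum>j<n. h j)] @ [(p, h n)]) (map (\<lambda>j. (p, h j)) [0..<n] @ [(p, h n)])"
    using Suc p by (intro teq2_append teq2_refl) auto
  ultimately show ?case by (auto intro: teq2_trans)
qed

lemma sum_list_closed_gen: "(\<And>l. l \<in> set L \<Longrightarrow> g l \<in> P) \<Longrightarrow> 0 \<in> P \<Longrightarrow>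
   (\<And>u v. u \<in> P \<Longrightarrow> v \<in> P \<Longrightarrow> u + v \<in> P) \<Longrightarrow> sum_list (map g L) \<in> P"
  by (induction L) auto

lemma teq2_sumL:
  fixes g :: "'l \<Rightarrow> 'p::ab_group_add"
  assumes q: "q \<in> Q" and P0: "0 \<in> P" and Padd: "\<And>u v. u \<in> P \<Longrightarrow> v \<in> P \<Longrightarrow> u + v \<in> P"
    and g: "\<And>l. l \<in> set L \<Longrightarrow> g l \<in> P"
  shows "teq2 P Q rP lQ Bs [(sum_list (map g L), q)] (map (\<lambda>l. (g l, q)) L)"
  using g
proof (induction L)
  case Nil then show ?case using teq2_zeroL[OF P0 q] by simp
next
  case (Cons l L)
  have S: "sum_list (map g L) \<in> P" using Cons.prems sum_list_closed_gen[of L g P] P0 Padd by auto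
  have "teq2 P Q rP lQ Bs [(g l + sum_list (map g L), q)] [(g l, q), (sum_list (map g L), q)]"
    using Cons.prems S q by (intro teq2_addL) (auto simp: Padd)
  moreover have "teq2 P Q rP lQ Bs ([(g l, q)] @ [(sum_list (map g L), q)]) ([(g l, q)] @ map (\<lambda>l. (g l, q)) L)"
    using Cons q by (intro teq2_append teq2_refl) auto
  ultimately show ?case by (auto intro: teq2_trans)
qed

lemma teq2_eval:
  fixes \<phi> :: "'p::ab_group_add \<times> 'q::ab_group_add \<Rightarrow> 'm::ab_group_add"
  assumes "teq2 P Q rP lQ Bs L L'"
    and a1: "\<And>p p' q. p \<in> P \<Longrightarrow> p' \<in> P \<Longrightarrow> q \<in> Q \<Longrightarrow> \<phi> (p + p', q) = \<phi> (p, q) + \<phi> (p', q)"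
    and a2: "\<And>p q q'. p \<in> P \<Longrightarrow> q \<in> Q \<Longrightarrow> q' \<in> Q \<Longrightarrow> \<phi> (p, q + q') = \<phi> (p, q) + \<phi> (p, q')"
    and a3: "\<And>b p q. b \<in> Bs \<Longrightarrow> p \<in> P \<Longrightarrow> q \<in> Q \<Longrightarrow> \<phi> (rP b p, q) = \<phi> (p, lQ b q)"
  shows "sum_list (map \<phi> L) = sum_list (map \<phi> L')"
proof (rule geq_eval[of "rel2 P Q rP lQ Bs"])
  show "geq (rel2 P Q rP lQ Bs) L L'" using assms(1) by (simp add: teq2_iff)
  fix g assume "g \<in> rel2 P Q rP lQ Bs"
  then show "\<exists>Lp Ln. g = formal Lp - formal Ln \<and> sum_list (map \<phi> Lp) = sum_list (map \<phi> Ln)"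
    unfolding rel2_def
  proof (elim UnE CollectE exE conjE)
    fix p p' q assume "g = delta (p + p', q) - delta (p, q) - delta (p', q)" "p \<in> P" "p' \<in> P" "q \<in> Q"
    then show ?thesis using a1 by (intro exI[of _ "[(p + p', q)]"] exI[of _ "[(p, q), (p', q)]"]) (simp add: algebra_simps)
  next
    fix p q q' assume "g = delta (p, q + q') - delta (p, q) - delta (p, q')" "p \<in> P" "q \<in> Q" "q' \<in> Q"
    then show ?thesis using a2 by (intro exI[of _ "[(p, q + q')]"] exI[of _ "[(p, q), (p, q')]"]) (simp add: algebra_simps)
  next
    fix b p q assume "g = delta (rP b p, q) - delta (p, lQ b q)" "b \<in> Bs" "p \<in> P" "q \<in> Q"
    then show ?thesis using a3 by (intro exI[of _ "[(rP b p, q)]"] exI[of _ "[(p, lQ b q)]"]) simp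
  qed
qed

lemma teq2_map1:
  fixes f :: "'p::ab_group_add \<Rightarrow> 'p2::ab_group_add"
  assumes "teq2 P Q rP lQ Bs L L'"
    and fP: "\<And>p. p \<in> P \<Longrightarrow> f p \<in> P'"
    and fadd: "\<And>p p'. p \<in> P \<Longrightarrow> p' \<in> P \<Longrightarrow> f (p + p') = f p + f p'"
    and fbal: "\<And>b p. b \<in> Bs \<Longrightarrow> p \<in> P \<Longrightarrow> f (rP b p) = rP' b (f p)"
  shows "teq2 P' Q rP' lQ Bs (map (\<lambda>(p, q). (f p, q)) L) (map (\<lambda>(p, q). (f p, q)) L')"
proof -
  let ?h = "\<lambda>(p, q). (f p, q)"
  have "geq (rel2 P' Q rP' lQ Bs) (map ?h L) (map ?h L')"
  proof (rule geq_map[of "rel2 P Q rP lQ Bs"])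
    show "geq (rel2 P Q rP lQ Bs) L L'" using assms(1) by (simp add: teq2_iff)
    fix g assume "g \<in> rel2 P Q rP lQ Bs"
    from this[unfolded rel2_def] show "\<exists>Lp Ln. g = formal Lp - formal Ln \<and> geq (rel2 P' Q rP' lQ Bs) (map ?h Lp) (map ?h Ln)"
    proof (elim UnE CollectE exE conjE)
      fix p p' q assume "g = delta (p + p', q) - delta (p, q) - delta (p', q)" "p \<in> P" "p' \<in> P" "q \<in> Q"
      moreover have "geq (rel2 P' Q rP' lQ Bs) [(f p + f p', q)] [(f p, q), (f p', q)]"
        using fP \<open>p \<in> P\<close> \<open>p' \<in> P\<close> \<open>q \<in> Q\<close> by (intro geq_gen3) (unfold rel2_def, blast)
      ultimately show ?thesis using fadd
        by (intro exI[of _ "[(p + p', q)]"] exI[of _ "[(p, q), (p', q)]"]) (simp add: algebra_simps)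
    next
      fix p q q' assume "g = delta (p, q + q') - delta (p, q) - delta (p, q')" "p \<in> P" "q \<in> Q" "q' \<in> Q"
      moreover have "geq (rel2 P' Q rP' lQ Bs) [(f p, q + q')] [(f p, q), (f p, q')]"
        using fP \<open>p \<in> P\<close> \<open>q' \<in> Q\<close> \<open>q \<in> Q\<close> by (intro geq_gen3) (unfold rel2_def, blast)
      ultimately show ?thesis
        by (intro exI[of _ "[(p, q + q')]"] exI[of _ "[(p, q), (p, q')]"]) (simp add: algebra_simps)
    next
      fix b p q assume "g = delta (rP b p, q) - delta (p, lQ b q)" "b \<in> Bs" "p \<in> P" "q \<in> Q"
      moreover have "geq (rel2 P' Q rP' lQ Bs) [(rP' b (f p), q)] [(f p, lQ b q)]"
        using fP \<open>p \<in> P\<close> \<open>b \<in> Bs\<close> \<open>q \<in> Q\<close> by (intro geq_gen2) (unfold rel2_def, blast)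
      ultimately show ?thesis using fbal
        by (intro exI[of _ "[(rP b p, q)]"] exI[of _ "[(p, lQ b q)]"]) simp
    qed
  qed
  moreover have "set (map ?h L) \<subseteq> P' \<times> Q" "set (map ?h L') \<subseteq> P' \<times> Q"
    using assms(1) fP by (auto simp: teq2_iff)
  ultimately show ?thesis by (simp add: teq2_iff)
qed



lemma teq3_iff: "teq3 P Q R rP lQ rQ lR Bs L L' \<longleftrightarrow> set L \<subseteq> P \<times> Q \<times> R \<and> set L' \<subseteq> P \<times> Q \<times> R \<and>
   geq (rel3 P Q R rP lQ rQ lR Bs) L L'"
  by (simp add: teq3_def geq_def)

lemma teq3_refl: "set L \<subseteq> P \<times> Q \<times> R \<Longrightarrow> teq3 P Q R rP lQ rQ lR Bs L L"
  by (simp add: teq3_iff geq_refl)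
lemma teq3_sym: "teq3 P Q R rP lQ rQ lR Bs L L' \<Longrightarrow> teq3 P Q R rP lQ rQ lR Bs L' L"
  by (simp add: teq3_iff geq_sym)
lemma teq3_trans: "teq3 P Q R rP lQ rQ lR Bs L L' \<Longrightarrow> teq3 P Q R rP lQ rQ lR Bs L' L'' \<Longrightarrow> teq3 P Q R rP lQ rQ lR Bs L L''"
  by (auto simp: teq3_iff intro: geq_trans)
lemma teq3_append: "teq3 P Q R rP lQ rQ lR Bs L1 L1' \<Longrightarrow> teq3 P Q R rP lQ rQ lR Bs L2 L2' \<Longrightarrow>
    teq3 P Q R rP lQ rQ lR Bs (L1 @ L2) (L1' @ L2')"
  by (auto simp: teq3_iff intro: geq_append)
lemma teq3_concat: "(\<And>i. i \<in> set I \<Longrightarrow> teq3 P Q R rP lQ rQ lR Bs (f i) (g i)) \<Longrightarrow>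
    teq3 P Q R rP lQ rQ lR Bs (concat (map f I)) (concat (map g I))"
  by (induction I) (auto intro: teq3_append teq3_refl)

lemma teq3_addM: "p \<in> P \<Longrightarrow> q \<in> Q \<Longrightarrow> q' \<in> Q \<Longrightarrow> r \<in> R \<Longrightarrow> q + q' \<in> Q \<Longrightarrow>
    teq3 P Q R rP lQ rQ lR Bs [(p, q + q', r)] [(p, q, r), (p, q', r)]"
  unfolding teq3_iff by (auto intro!: geq_gen3) (unfold rel3_def, blast)
lemma teq3_balPQ: "b \<in> Bs \<Longrightarrow> p \<in> P \<Longrightarrow> q \<in> Q \<Longrightarrow> r \<in> R \<Longrightarrow> rP b p \<in> P \<Longrightarrow> lQ b q \<in> Q \<Longrightarrow>
    teq3 P Q R rP lQ rQ lR Bs [(rP b p, q, r)] [(p, lQ b q, r)]"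
  unfolding teq3_iff by (auto intro!: geq_gen2) (unfold rel3_def, blast)

lemma teq3_zeroM: assumes "p \<in> P" "(0::'q::ab_group_add) \<in> Q" "r \<in> R"
  shows "teq3 P Q R rP lQ rQ lR Bs [(p, 0::'q, r)] []"
proof -
  have "teq3 P Q R rP lQ rQ lR Bs [(p, 0 + 0, r)] [(p, 0, r), (p, 0, r)]" using assms by (intro teq3_addM) auto
  then show ?thesis using assms unfolding teq3_iff geq_def by (auto simp: algebra_simps dest: gsub_uminus)
qed

lemma teq3_sumM:
  fixes h :: "nat \<Rightarrow> 'q::ab_group_add"
  assumes p: "p \<in> P" and r: "r \<in> R" and Q0: "0 \<in> Q" and Qadd: "\<And>u v. u \<in> Q \<Longrightarrow> v \<in> Q \<Longrightarrow> u + v \<in> Q"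
    and h: "\<And>j. j < n \<Longrightarrow> h j \<in> Q"
  shows "teq3 P Q R rP lQ rQ lR Bs [(p, \<Sum>j<n. h j, r)] (map (\<lambda>j. (p, h j, r)) [0..<n])"
  using h
proof (induction n)
  case 0 then show ?case using teq3_zeroM[OF p Q0 r] by simp
next
  case (Suc n)
  have S: "(\<Sum>j<n. h j) \<in> Q" using Suc.prems by (induction n) (auto simp: Q0 Qadd)
  have "teq3 P Q R rP lQ rQ lR Bs [(p, (\<Sum>j<n. h j) + h n, r)] [(p, \<Sum>j<n. h j, r), (p, h n, r)]"
    using Suc.prems S p r by (intro teq3_addM) (auto simp: Qadd)
  moreover have "teq3 P Q R rP lQ rQ lR Bs ([(p, \<Sum>j<n. h j, r)] @ [(p, h n, r)]) (map (\<lambda>j. (p, h j, r)) [0..<n] @ [(p, h n, r)])"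
    using Suc p r by (intro teq3_append teq3_refl) auto
  ultimately show ?case by (auto intro: teq3_trans)
qed

lemma teq3_eval:
  fixes \<phi> :: "'p::ab_group_add \<times> 'q::ab_group_add \<times> 'r::ab_group_add \<Rightarrow> 'm::ab_group_add"
  assumes "teq3 P Q R rP lQ rQ lR Bs L L'"
    and a1: "\<And>p p' q r. p \<in> P \<Longrightarrow> p' \<in> P \<Longrightarrow> q \<in> Q \<Longrightarrow> r \<in> R \<Longrightarrow> \<phi> (p + p', q, r) = \<phi> (p, q, r) + \<phi> (p', q, r)"
    and a2: "\<And>p q q' r. p \<in> P \<Longrightarrow> q \<in> Q \<Longrightarrow> q' \<in> Q \<Longrightarrow> r \<in> R \<Longrightarrow> \<phi> (p, q + q', r) = \<phi> (p, q, r) + \<phi> (p, q', r)"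
    and a3: "\<And>p q r r'. p \<in> P \<Longrightarrow> q \<in> Q \<Longrightarrow> r \<in> R \<Longrightarrow> r' \<in> R \<Longrightarrow> \<phi> (p, q, r + r') = \<phi> (p, q, r) + \<phi> (p, q, r')"
    and a4: "\<And>b p q r. b \<in> Bs \<Longrightarrow> p \<in> P \<Longrightarrow> q \<in> Q \<Longrightarrow> r \<in> R \<Longrightarrow> \<phi> (rP b p, q, r) = \<phi> (p, lQ b q, r)"
    and a5: "\<And>b p q r. b \<in> Bs \<Longrightarrow> p \<in> P \<Longrightarrow> q \<in> Q \<Longrightarrow> r \<in> R \<Longrightarrow> \<phi> (p, rQ b q, r) = \<phi> (p, q, lR b r)"
  shows "sum_list (map \<phi> L) = sum_list (map \<phi> L')"
proof (rule geq_eval[of "rel3 P Q R rP lQ rQ lR Bs"])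
  show "geq (rel3 P Q R rP lQ rQ lR Bs) L L'" using assms(1) by (simp add: teq3_iff)
  fix g assume "g \<in> rel3 P Q R rP lQ rQ lR Bs"
  from this[unfolded rel3_def]
  show "\<exists>Lp Ln. g = formal Lp - formal Ln \<and> sum_list (map \<phi> Lp) = sum_list (map \<phi> Ln)"
  proof (elim UnE CollectE exE conjE)
    fix p p' q r assume "g = delta (p + p', q, r) - delta (p, q, r) - delta (p', q, r)" "p \<in> P" "p' \<in> P" "q \<in> Q" "r \<in> R"
    then show ?thesis using a1 by (intro exI[of _ "[(p + p', q, r)]"] exI[of _ "[(p, q, r), (p', q, r)]"]) (simp add: algebra_simps)
  next
    fix p q q' r assume "g = delta (p, q + q', r) - delta (p, q, r) - delta (p, q', r)" "p \<in> P" "q \<in> Q" "q' \<in> Q" "r \<in> R"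
    then show ?thesis using a2 by (intro exI[of _ "[(p, q + q', r)]"] exI[of _ "[(p, q, r), (p, q', r)]"]) (simp add: algebra_simps)
  next
    fix p q r r' assume "g = delta (p, q, r + r') - delta (p, q, r) - delta (p, q, r')" "p \<in> P" "q \<in> Q" "r \<in> R" "r' \<in> R"
    then show ?thesis using a3 by (intro exI[of _ "[(p, q, r + r')]"] exI[of _ "[(p, q, r), (p, q, r')]"]) (simp add: algebra_simps)
  next
    fix b p q r assume "g = delta (rP b p, q, r) - delta (p, lQ b q, r)" "b \<in> Bs" "p \<in> P" "q \<in> Q" "r \<in> R"
    then show ?thesis using a4 by (intro exI[of _ "[(rP b p, q, r)]"] exI[of _ "[(p, lQ b q, r)]"]) simp
  next
    fix b p q r assume "g = delta (p, rQ b q, r) - delta (p, q, lR b r)" "b \<in> Bs" "p \<in> P" "q \<in> Q" "r \<in> R"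
    then show ?thesis using a5 by (intro exI[of _ "[(p, rQ b q, r)]"] exI[of _ "[(p, q, lR b r)]"]) simp
  qed
qed



context ctx begin

lemma rmod_props:
  assumes "rmod D sM Mc act"
  shows "module sM" and "ksubmod sM (Mc x y)"
    and "m \<in> Mc x y \<Longrightarrow> a \<in> Ah D y z \<Longrightarrow> act x y z m a \<in> Mc x z"
    and "m \<in> Mc x y \<Longrightarrow> m' \<in> Mc x y \<Longrightarrow> a \<in> Ah D y z \<Longrightarrow> act x y z (m + m') a = act x y z m a + act x y z m' a"
    and "m \<in> Mc x y \<Longrightarrow> a \<in> Ah D y z \<Longrightarrow> a' \<in> Ah D y z \<Longrightarrow> act x y z m (a + a') = act x y z m a + act x y z m a'"
    and "m \<in> Mc x y \<Longrightarrow> a \<in> Ah D y z \<Longrightarrow> act x y z (sM c m) a = sM c (act x y z m a)"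
    and "m \<in> Mc x y \<Longrightarrow> a \<in> Ah D y z \<Longrightarrow> act x y z m (sA D c a) = sM c (act x y z m a)"
    and "m \<in> Mc x y \<Longrightarrow> a \<in> Ah D y z \<Longrightarrow> b \<in> Ah D z w \<Longrightarrow> act x z w (act x y z m a) b = act x y w m (cmp D y z w a b)"
    and "m \<in> Mc x y \<Longrightarrow> act x y y m (one D y) = m"
  using assms unfolding rmod_def by (simp_all (no_asm_simp))

lemma descent_props:
  assumes "descent D sM Mc act \<sigma>"
  shows "rmod D sM Mc act"
    and "m \<in> Mc x y \<Longrightarrow> set (\<sigma> x y m) \<subseteq> Mc x x \<times> Ah D x y"
    and "m \<in> Mc x y \<Longrightarrow> m' \<in> Mc x y \<Longrightarrow> tMA D Mc act x y (\<sigma> x y (m + m')) (\<sigma> x y m @ \<sigma> x y m')"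
    and "m \<in> Mc x y \<Longrightarrow> tMA D Mc act x y (\<sigma> x y (sM c m)) (map (\<lambda>(p, a). (sM c p, a)) (\<sigma> x y m))"
    and "m \<in> Mc x y \<Longrightarrow> a \<in> Ah D y z \<Longrightarrow>
        tMA D Mc act x z (\<sigma> x z (act x y z m a)) (map (\<lambda>(p, a'). (p, cmp D x y z a' a)) (\<sigma> x y m))"
    and "m \<in> Mc x y \<Longrightarrow> tMAA D Mc act x y (concat (map (\<lambda>(p, a). map (\<lambda>(q, a'). (q, a', a)) (\<sigma> x x p)) (\<sigma> x y m)))
                          (map (\<lambda>(p, a). (p, one D x, a)) (\<sigma> x y m))"
    and "m \<in> Mc x y \<Longrightarrow> sum_list (map (\<lambda>(p, a). act x x y p a) (\<sigma> x y m)) = m"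
  using assms unfolding descent_def by (simp_all (no_asm_simp))

lemma ks0: "ksubmod s S \<Longrightarrow> 0 \<in> S" by (simp add: ksubmod_def)
lemma ksadd: "ksubmod s S \<Longrightarrow> u \<in> S \<Longrightarrow> v \<in> S \<Longrightarrow> u + v \<in> S" by (simp add: ksubmod_def)
lemma ksscale: "ksubmod s S \<Longrightarrow> u \<in> S \<Longrightarrow> s c u \<in> S" by (simp add: ksubmod_def)

lemma ks_sum_list: "ksubmod s S \<Longrightarrow> (\<And>l. l \<in> set L \<Longrightarrow> g l \<in> S) \<Longrightarrow> sum_list (map g L) \<in> S"
  by (rule add_sum_list_closed[where S=S]) (auto simp: ks0 ksadd)
lemma ks_sum: "ksubmod s S \<Longrightarrow> (\<And>l. l < (n::nat) \<Longrightarrow> g l \<in> S) \<Longrightarrow> (\<Sum>j<n. g j) \<in> S"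
  by (rule add_sum_closed[where S=S]) (auto simp: ks0 ksadd)

lemma act_sum_list:
  assumes r: "rmod D sM Mc act" and g: "\<And>l. l \<in> set L \<Longrightarrow> g l \<in> Mc x y" and a: "a \<in> Ah D y z"
  shows "act x y z (sum_list (map g L)) a = sum_list (map (\<lambda>l. act x y z (g l) a) L)"
  by (rule add_hom_sum_list[where S="Mc x y"])
     (auto simp: ks0[OF rmod_props(2)[OF r]] ksadd[OF rmod_props(2)[OF r]] rmod_props(4)[OF r] a g)

lemma ev_teq:
  assumes r: "rmod D sM Mc act" and f: "f \<in> EndC D x y z" and t: "tMA D Mc act x y L L'"
  shows "sum_list (map (\<lambda>(p, a). act x x z p (f a)) L) = sum_list (map (\<lambda>(p, a). act x x z p (f a)) L')"
  using t[unfolded tMA_def]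
proof (rule teq2_eval)
  fix p p' q assume "p \<in> Mc x x" "p' \<in> Mc x x" "q \<in> Ah D x y"
  then show "(case (p + p', q) of (p, a) \<Rightarrow> act x x z p (f a)) =
       (case (p, q) of (p, a) \<Rightarrow> act x x z p (f a)) + (case (p', q) of (p, a) \<Rightarrow> act x x z p (f a))"
    by (simp add: rmod_props(4)[OF r] End_in[OF f])
next
  fix p q q' assume "p \<in> Mc x x" "q \<in> Ah D x y" "q' \<in> Ah D x y"
  then show "(case (p, q + q') of (p, a) \<Rightarrow> act x x z p (f a)) =
       (case (p, q) of (p, a) \<Rightarrow> act x x z p (f a)) + (case (p, q') of (p, a) \<Rightarrow> act x x z p (f a))"
    by (simp add: rmod_props(5)[OF r] End_in[OF f] End_add[OF f])
next
  fix b p q assume b: "b \<in> Bc D x" and p: "p \<in> Mc x x" and q: "q \<in> Ah D x y"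
  have "act x x z (act x x x p (fi D x b)) (f q) = act x x z p (cmp D x x z (fi D x b) (f q))"
    by (rule rmod_props(8)[OF r p fi_in[OF b] End_in[OF f q]])
  also have "\<dots> = act x x z p (f (lB D x y b q))" using End_lin[OF f b q] by (simp add: lB_def)
  finally show "(case ((\<lambda>b m. act x x x m (fi D x b)) b p, q) of (p, a) \<Rightarrow> act x x z p (f a)) =
       (case (p, lB D x y b q) of (p, a) \<Rightarrow> act x x z p (f a))" by simp
qed

end


lemma sum_list_map_concat: "sum_list (map \<phi> (concat xss)) = sum_list (map (\<lambda>xs. sum_list (map \<phi> xs)) xss)"
  by (induction xss) auto

lemma module_sum_list: "module s \<Longrightarrow> s c (sum_list (map g L)) = sum_list (map (\<lambda>l. s c (g l)) L)"
  by (induction L) (auto simp: module.scale_right_distrib module.scale_zero_right)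

context ctx begin

lemma part1:
  assumes d: "descent D sM Mc act \<sigma>"
  shows "rcmod D sM Mc (desc_action act \<sigma>)"
proof -
  note r = descent_props(1)[OF d]
  note ks = rmod_props(2)[OF r]
  note sig = descent_props(2)[OF d]
  let ?\<rho> = "desc_action act \<sigma>"
  have clos: "?\<rho> x y z m f \<in> Mc x z" if m: "m \<in> Mc x y" and f: "f \<in> EndC D x y z" for x y z m f
    unfolding desc_action_def
    by (rule ks_sum_list[OF ks]) (use sig[OF m] in \<open>auto intro!: rmod_props(3)[OF r] End_in[OF f]\<close>)
  have addm: "?\<rho> x y z (m + m') f = ?\<rho> x y z m f + ?\<rho> x y z m' f"
    if m: "m \<in> Mc x y" and m': "m' \<in> Mc x y" and f: "f \<in> EndC D x y z" for x y z m m' f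
    unfolding desc_action_def using ev_teq[OF r f descent_props(3)[OF d m m']] by simp
  have addf: "?\<rho> x y z m (cadd D x y f g) = ?\<rho> x y z m f + ?\<rho> x y z m g"
    if m: "m \<in> Mc x y" and f: "f \<in> EndC D x y z" and g: "g \<in> EndC D x y z" for x y z m f g
  proof -
    have e: "map (\<lambda>(p, a). act x x z p (cadd D x y f g a)) (\<sigma> x y m) =
          map (\<lambda>l. (case l of (p, a) \<Rightarrow> act x x z p (f a)) + (case l of (p, a) \<Rightarrow> act x x z p (g a))) (\<sigma> x y m)"
      using sig[OF m] by (auto simp: cadd_def rmod_props(5)[OF r] End_in[OF f] End_in[OF g])
    show ?thesis unfolding desc_action_def e by (rule sum_list_addf)
  qed
  have scm: "?\<rho> x y z (sM c m) f = sM c (?\<rho> x y z m f)"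
    if m: "m \<in> Mc x y" and f: "f \<in> EndC D x y z" for x y z c m f
  proof -
    have "?\<rho> x y z (sM c m) f = sum_list (map (\<lambda>(p, a). act x x z p (f a)) (map (\<lambda>(p, a). (sM c p, a)) (\<sigma> x y m)))"
      unfolding desc_action_def using ev_teq[OF r f descent_props(4)[OF d m]] by simp
    also have "\<dots> = sum_list (map (\<lambda>l. sM c (case l of (p, a) \<Rightarrow> act x x z p (f a))) (\<sigma> x y m))"
      by (rule arg_cong[where f=sum_list]) (use sig[OF m] in \<open>auto simp: rmod_props(6)[OF r] End_in[OF f]\<close>)
    also have "\<dots> = sM c (?\<rho> x y z m f)"
      unfolding desc_action_def by (rule module_sum_list[OF rmod_props(1)[OF r], symmetric])
    finally show ?thesis .
  qed
  have scf: "?\<rho> x y z m (csc D x y c f) = sM c (?\<rho> x y z m f)"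
    if m: "m \<in> Mc x y" and f: "f \<in> EndC D x y z" for x y z c m f
  proof -
    have "?\<rho> x y z m (csc D x y c f) = sum_list (map (\<lambda>l. sM c (case l of (p, a) \<Rightarrow> act x x z p (f a))) (\<sigma> x y m))"
      unfolding desc_action_def
      by (rule arg_cong[where f=sum_list]) (use sig[OF m] in \<open>auto simp: csc_def rmod_props(7)[OF r] End_in[OF f]\<close>)
    also have "\<dots> = sM c (?\<rho> x y z m f)"
      unfolding desc_action_def by (rule module_sum_list[OF rmod_props(1)[OF r], symmetric])
    finally show ?thesis .
  qed
  have unit: "?\<rho> x y y m (cunit D x y) = m" if m: "m \<in> Mc x y" for x y m
  proof -
    have "?\<rho> x y y m (cunit D x y) = sum_list (map (\<lambda>(p, a). act x x y p a) (\<sigma> x y m))"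
      unfolding desc_action_def
      by (rule arg_cong[where f=sum_list]) (use sig[OF m] in \<open>auto simp: cunit_def\<close>)
    then show ?thesis using descent_props(7)[OF d m] by simp
  qed
  have comp: "?\<rho> x z w (?\<rho> x y z m f) g = ?\<rho> x y w m (ccomp D x y f g)"
    if m: "m \<in> Mc x y" and f: "f \<in> EndC D x y z" and g: "g \<in> EndC D x z w" for x y z w m f g
  proof -
    let ?\<phi> = "\<lambda>(q, a', a). act x x w q (g (cmp D x x z a' (f a)))"
    let ?L = "concat (map (\<lambda>(p, a). map (\<lambda>(q, a'). (q, a', a)) (\<sigma> x x p)) (\<sigma> x y m))"
    have elem: "?\<rho> x z w (act x x z p (f a)) g = sum_list (map (\<lambda>(q, a'). act x x w q (g (cmp D x x z a' (f a)))) (\<sigma> x x p))"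
      if pa: "(p, a) \<in> set (\<sigma> x y m)" for p a
    proof -
      have p: "p \<in> Mc x x" and a: "a \<in> Ah D x y" using sig[OF m] pa by auto
      show ?thesis unfolding desc_action_def
        using ev_teq[OF r g descent_props(5)[OF d p End_in[OF f a]]] by (simp add: case_prod_unfold o_def)
    qed
    have "?\<rho> x z w (?\<rho> x y z m f) g = sum_list (map (\<lambda>l. ?\<rho> x z w ((\<lambda>(p, a). act x x z p (f a)) l) g) (\<sigma> x y m))"
      unfolding desc_action_def[of act \<sigma> x y z]
      by (rule add_hom_sum_list[where S="Mc x z"])
         (use sig[OF m] in \<open>auto simp: ks0[OF ks] ksadd[OF ks] addm[OF _ _ g]
            intro!: rmod_props(3)[OF r] End_in[OF f]\<close>)
    also have "\<dots> = sum_list (map (\<lambda>(p, a). sum_list (map (\<lambda>(q, a'). act x x w q (g (cmp D x x z a' (f a)))) (\<sigma> x x p))) (\<sigma> x y m))"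
      by (intro arg_cong[where f=sum_list] map_cong refl) (auto simp: elem)
    also have "\<dots> = sum_list (map ?\<phi> ?L)"
      by (simp add: sum_list_map_concat case_prod_unfold o_def)
    also have "\<dots> = sum_list (map ?\<phi> (map (\<lambda>(p, a). (p, one D x, a)) (\<sigma> x y m)))"
      using descent_props(6)[OF d m, unfolded tMAA_def]
    proof (rule teq3_eval)
      fix p p' q r' assume "p \<in> Mc x x" "p' \<in> Mc x x" "q \<in> Ah D x x" "r' \<in> Ah D x y"
      then show "?\<phi> (p + p', q, r') = ?\<phi> (p, q, r') + ?\<phi> (p', q, r')"
        by (simp add: rmod_props(4)[OF r] End_in[OF f] End_in[OF g] cmp_in)
    next
      fix p q q' r' assume "p \<in> Mc x x" "q \<in> Ah D x x" "q' \<in> Ah D x x" "r' \<in> Ah D x y"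
      then show "?\<phi> (p, q + q', r') = ?\<phi> (p, q, r') + ?\<phi> (p, q', r')"
        by (simp add: rmod_props(5)[OF r] End_in[OF f] End_in[OF g] cmp_in cmp_addL End_add[OF g])
    next
      fix p q r' r'' assume "p \<in> Mc x x" "q \<in> Ah D x x" "r' \<in> Ah D x y" "r'' \<in> Ah D x y"
      then show "?\<phi> (p, q, r' + r'') = ?\<phi> (p, q, r') + ?\<phi> (p, q, r'')"
        by (simp add: rmod_props(5)[OF r] End_in[OF f] End_in[OF g] cmp_in cmp_addR End_add[OF g] End_add[OF f])
    next
      fix b p q r' assume b: "b \<in> Bc D x" and p: "p \<in> Mc x x" and q: "q \<in> Ah D x x" and r': "r' \<in> Ah D x y"
      have fr: "f r' \<in> Ah D x z" by (rule End_in[OF f r'])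
      have "act x x w (act x x x p (fi D x b)) (g (cmp D x x z q (f r'))) =
            act x x w p (cmp D x x w (fi D x b) (g (cmp D x x z q (f r'))))"
        by (rule rmod_props(8)[OF r p fi_in[OF b] End_in[OF g cmp_in[OF q fr]]])
      also have "\<dots> = act x x w p (g (lB D x z b (cmp D x x z q (f r'))))"
        using End_lin[OF g b cmp_in[OF q fr]] by (simp add: lB_def)
      also have "lB D x z b (cmp D x x z q (f r')) = cmp D x x z (lB D x x b q) (f r')"
        by (simp add: lB_def cmp_assoc fi_in[OF b] q fr)
      finally show "?\<phi> ((\<lambda>b m. act x x x m (fi D x b)) b p, q, r') = ?\<phi> (p, lB D x x b q, r')" by simp
    next
      fix b p q r' assume b: "b \<in> Bc D x" and p: "p \<in> Mc x x" and q: "q \<in> Ah D x x" and r': "r' \<in> Ah D x y"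
      have fr: "f r' \<in> Ah D x z" by (rule End_in[OF f r'])
      have "cmp D x x z (cmp D x x x q (fi D x b)) (f r') = cmp D x x z q (cmp D x x z (fi D x b) (f r'))"
        by (rule cmp_assoc[OF q fi_in[OF b] fr])
      also have "\<dots> = cmp D x x z q (f (lB D x y b r'))"
        using End_lin[OF f b r'] by (simp add: lB_def)
      finally show "?\<phi> (p, (\<lambda>b a. cmp D x x x a (fi D x b)) b q, r') = ?\<phi> (p, q, lB D x y b r')" by simp
    qed
    also have "\<dots> = ?\<rho> x y w m (ccomp D x y f g)"
      unfolding desc_action_def
      by (rule arg_cong[where f=sum_list]) (use sig[OF m] in \<open>auto simp: ccomp_def cmp_oneL End_in[OF f]\<close>)
    finally show ?thesis .
  qed
  show ?thesis unfolding rcmod_def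
    by (simp add: rmod_props(1)[OF r] ks clos addm addf scm scf comp unit)
qed

end


lemma mset_concat_cons: "mset (concat (map (\<lambda>j. a j # b j) J)) = mset (map a J) + mset (concat (map b J))"
  by (induction J) auto

lemma mset_swap: "mset (concat (map (\<lambda>i. map (\<lambda>j. F i j) J) I)) = mset (concat (map (\<lambda>j. map (\<lambda>i. F i j) I) J))"
proof (induction I)
  case Nil then show ?case by (induction J) auto
next
  case (Cons i I) then show ?case by (simp add: mset_concat_cons)
qed

lemma concat_singletons: "concat (map (\<lambda>x. [f x]) xs) = map f xs"
  by (induction xs) auto

lemma rel2_cong: "(\<And>b p. b \<in> Bs \<Longrightarrow> p \<in> P \<Longrightarrow> rP b p = rP' b p) \<Longrightarrow> rel2 P Q rP lQ Bs = rel2 P Q rP' lQ Bs"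
  unfolding rel2_def by (intro arg_cong2[where f="(\<union>)"] refl) (auto, metis+)

context ctx begin

lemma tMA_cong:
  assumes "\<And>m a. m \<in> Mc x x \<Longrightarrow> a \<in> Ah D x x \<Longrightarrow> act x x x m a = act' x x x m a"
  shows "tMA D Mc act x y = tMA D Mc act' x y"
proof -
  have "rel2 (Mc x x) (Ah D x y) (\<lambda>b m. act x x x m (fi D x b)) (lB D x y) (Bc D x) =
        rel2 (Mc x x) (Ah D x y) (\<lambda>b m. act' x x x m (fi D x b)) (lB D x y) (Bc D x)"
    by (rule rel2_cong) (simp add: assms fi_in)
  then show ?thesis unfolding tMA_def teq2_def by simp
qed

lemma expand1:
  assumes r: "rmod D sM Mc act" and p: "p \<in> Mc x x" and a: "a \<in> Ah D x y"
  shows "tMA D Mc act x y [(p, a)] (map (\<lambda>k. (act x x x p (fi D x (Ph x y k a)), E x y k)) [0..<N x y])"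
  unfolding tMA_def
proof (rule teq2_trans)
  show "teq2 (Mc x x) (Ah D x y) (\<lambda>b m. act x x x m (fi D x b)) (lB D x y) (Bc D x) [(p, a)]
      (map (\<lambda>k. (p, lB D x y (Ph x y k a) (E x y k))) [0..<N x y])"
    using teq2_sumR[OF p A0[of x y] Aadd[of _ x y], where n="N x y" and h="\<lambda>k. lB D x y (Ph x y k a) (E x y k)"] decomp[OF a]
    by (simp add: decomp[OF a, symmetric] lB_in Ph_in a E_in)
  have "teq2 (Mc x x) (Ah D x y) (\<lambda>b m. act x x x m (fi D x b)) (lB D x y) (Bc D x)
      (concat (map (\<lambda>k. [(p, lB D x y (Ph x y k a) (E x y k))]) [0..<N x y]))
      (concat (map (\<lambda>k. [(act x x x p (fi D x (Ph x y k a)), E x y k)]) [0..<N x y]))"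
    by (rule teq2_concat, rule teq2_sym, rule teq2_bal)
       (auto simp: Ph_in a E_in p lB_in intro!: rmod_props(3)[OF r] fi_in)
  then show "teq2 (Mc x x) (Ah D x y) (\<lambda>b m. act x x x m (fi D x b)) (lB D x y) (Bc D x)
      (map (\<lambda>k. (p, lB D x y (Ph x y k a) (E x y k))) [0..<N x y])
      (map (\<lambda>k. (act x x x p (fi D x (Ph x y k a)), E x y k)) [0..<N x y])"
    by (simp add: concat_singletons)
qed

lemma std_form:
  assumes d: "descent D sM Mc act \<sigma>" and m: "m \<in> Mc x y"
  shows "tMA D Mc act x y (\<sigma> x y m) (map (\<lambda>j. (desc_action act \<sigma> x y x m (dual x y j), E x y j)) [0..<N x y])"
proof -
  note r = descent_props(1)[OF d]
  note ks = rmod_props(2)[OF r]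
  note sig = descent_props(2)[OF d m]
  let ?L = "\<sigma> x y m"
  let ?F = "\<lambda>l k. (act x x x (fst l) (fi D x (Ph x y k (snd l))), E x y k)"
  have Fin: "?F l k \<in> Mc x x \<times> Ah D x y" if "l \<in> set ?L" "k < N x y" for l k
    using that sig by (auto intro!: rmod_props(3)[OF r] fi_in Ph_in E_in)
  have 1: "tMA D Mc act x y (concat (map (\<lambda>l. [l]) ?L)) (concat (map (\<lambda>l. map (\<lambda>k. ?F l k) [0..<N x y]) ?L))"
    unfolding tMA_def
    by (rule teq2_concat) (use sig in \<open>auto intro!: expand1[OF r, unfolded tMA_def]\<close>)
  have 2: "tMA D Mc act x y (concat (map (\<lambda>l. map (\<lambda>k. ?F l k) [0..<N x y]) ?L))
                            (concat (map (\<lambda>k. map (\<lambda>l. ?F l k) ?L) [0..<N x y]))"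
    unfolding tMA_def by (rule teq2_mset[OF mset_swap]) (use Fin in auto)
  have 3: "tMA D Mc act x y (concat (map (\<lambda>k. map (\<lambda>l. ?F l k) ?L) [0..<N x y]))
            (concat (map (\<lambda>k. [(desc_action act \<sigma> x y x m (dual x y k), E x y k)]) [0..<N x y]))"
    unfolding tMA_def
  proof (rule teq2_concat)
    fix k assume k: "k \<in> set [0..<N x y]"
    have "desc_action act \<sigma> x y x m (dual x y k) = sum_list (map (\<lambda>l. act x x x (fst l) (fi D x (Ph x y k (snd l)))) ?L)"
      unfolding desc_action_def
      by (rule arg_cong[where f=sum_list]) (use sig in \<open>auto simp: dual_app\<close>)
    moreover have "teq2 (Mc x x) (Ah D x y) (\<lambda>b m. act x x x m (fi D x b)) (lB D x y) (Bc D x)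
        [(sum_list (map (\<lambda>l. act x x x (fst l) (fi D x (Ph x y k (snd l)))) ?L), E x y k)] (map (\<lambda>l. ?F l k) ?L)"
      by (rule teq2_sumL[OF _ ks0[OF ks] ksadd[OF ks]]) (use k sig in \<open>auto intro!: E_in rmod_props(3)[OF r] fi_in Ph_in\<close>)
    ultimately show "teq2 (Mc x x) (Ah D x y) (\<lambda>b m. act x x x m (fi D x b)) (lB D x y) (Bc D x)
        (map (\<lambda>l. ?F l k) ?L) [(desc_action act \<sigma> x y x m (dual x y k), E x y k)]"
      by (simp add: teq2_sym)
  qed
  from 1 2 3 show ?thesis unfolding tMA_def
    by (simp add: concat_singletons) (meson teq2_trans)
qed

lemma act_rho:
  assumes d: "descent D sM Mc act \<sigma>" and m: "m \<in> Mc x y" and a: "a \<in> Ah D y z"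
  shows "desc_action act \<sigma> x y z m (rmul x y z a) = act x y z m a"
proof -
  note r = descent_props(1)[OF d]
  note sig = descent_props(2)[OF d m]
  have "desc_action act \<sigma> x y z m (rmul x y z a) = sum_list (map (\<lambda>l. act x y z ((\<lambda>(p, a'). act x x y p a') l) a) (\<sigma> x y m))"
    unfolding desc_action_def
    by (rule arg_cong[where f=sum_list]) (use sig in \<open>auto simp: rmul_app rmod_props(8)[OF r] a\<close>)
  also have "\<dots> = act x y z (sum_list (map (\<lambda>(p, a'). act x x y p a') (\<sigma> x y m))) a"
    by (rule act_sum_list[OF r _ a, symmetric]) (use sig in \<open>auto intro: rmod_props(3)[OF r]\<close>)
  finally show ?thesis using descent_props(7)[OF d m] by simp
qed

lemma part3:
  assumes d: "descent D sM Mc act \<sigma>" and d': "descent D sM Mc act' \<sigma>'"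
    and s: "same_cmod D Mc (desc_action act \<sigma>) (desc_action act' \<sigma>')"
  shows "same_desc D Mc act \<sigma> act' \<sigma>'"
proof -
  have aa: "act x y z m a = act' x y z m a" if "m \<in> Mc x y" "a \<in> Ah D y z" for x y z m a
  proof -
    have "desc_action act \<sigma> x y z m (rmul x y z a) = desc_action act' \<sigma>' x y z m (rmul x y z a)"
      using s that rmul_End[OF that(2)] unfolding same_cmod_def by blast
    then show ?thesis using act_rho[OF d that] act_rho[OF d' that] by simp
  qed
  have "tMA D Mc act x y (\<sigma> x y m) (\<sigma>' x y m)" if m: "m \<in> Mc x y" for x y m
  proof -
    have e: "map (\<lambda>j. (desc_action act' \<sigma>' x y x m (dual x y j), E x y j)) [0..<N x y] =
          map (\<lambda>j. (desc_action act \<sigma> x y x m (dual x y j), E x y j)) [0..<N x y]"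
      using s m dual_End by (auto simp: same_cmod_def)
    have "tMA D Mc act x y (\<sigma>' x y m) (map (\<lambda>j. (desc_action act \<sigma> x y x m (dual x y j), E x y j)) [0..<N x y])"
      using std_form[OF d' m] tMA_cong[where Mc=Mc and act=act' and act'=act and x=x and y=y] aa e by simp
    then show ?thesis using std_form[OF d m] unfolding tMA_def by (meson teq2_sym teq2_trans)
  qed
  then show ?thesis using aa by (simp add: same_desc_def)
qed

end


context ctx begin

lemma part4:
  assumes d: "descent D sM Mc act \<sigma>" and d': "descent D sN Nc act' \<sigma>'"
  shows "desc_hom D sM Mc act \<sigma> sN Nc act' \<sigma>' f \<longleftrightarrow>
         rcmod_hom D sM Mc (desc_action act \<sigma>) sN Nc (desc_action act' \<sigma>') f"
proof
  note r = descent_props(1)[OF d] and r' = descent_props(1)[OF d']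
  note ks = rmod_props(2)[OF r] and ks' = rmod_props(2)[OF r']
  assume h: "desc_hom D sM Mc act \<sigma> sN Nc act' \<sigma>' f"
  then have kf: "klin_fam sM Mc sN Nc f"
    and fa: "\<And>x y z m a. m \<in> Mc x y \<Longrightarrow> a \<in> Ah D y z \<Longrightarrow> f x z (act x y z m a) = act' x y z (f x y m) a"
    and ft: "\<And>x y m. m \<in> Mc x y \<Longrightarrow> tMA D Nc act' x y (map (\<lambda>(p, a). (f x x p, a)) (\<sigma> x y m)) (\<sigma>' x y (f x y m))"
    by (auto simp: desc_hom_def rmod_hom_def)
  have fin: "\<And>x y m. m \<in> Mc x y \<Longrightarrow> f x y m \<in> Nc x y"
    and fadd: "\<And>x y m m'. m \<in> Mc x y \<Longrightarrow> m' \<in> Mc x y \<Longrightarrow> f x y (m + m') = f x y m + f x y m'"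
    using kf by (auto simp: klin_fam_def)
  have "f x z (desc_action act \<sigma> x y z m g) = desc_action act' \<sigma>' x y z (f x y m) g"
    if m: "m \<in> Mc x y" and g: "g \<in> EndC D x y z" for x y z m g
  proof -
    note sig = descent_props(2)[OF d m]
    have "f x z (desc_action act \<sigma> x y z m g) = sum_list (map (\<lambda>l. f x z ((\<lambda>(p, a). act x x z p (g a)) l)) (\<sigma> x y m))"
      unfolding desc_action_def
      by (rule add_hom_sum_list[where S="Mc x z"])
         (use sig in \<open>auto simp: ks0[OF ks] ksadd[OF ks] fadd intro!: rmod_props(3)[OF r] End_in[OF g]\<close>)
    also have "\<dots> = sum_list (map (\<lambda>(p, a). act' x x z p (g a)) (map (\<lambda>(p, a). (f x x p, a)) (\<sigma> x y m)))"
      by (rule arg_cong[where f=sum_list]) (use sig in \<open>auto simp: fa End_in[OF g]\<close>)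
    also have "\<dots> = desc_action act' \<sigma>' x y z (f x y m) g"
      unfolding desc_action_def by (rule ev_teq[OF r' g ft[OF m]])
    finally show ?thesis .
  qed
  then show "rcmod_hom D sM Mc (desc_action act \<sigma>) sN Nc (desc_action act' \<sigma>') f"
    using kf by (simp add: rcmod_hom_def)
next
  note r = descent_props(1)[OF d] and r' = descent_props(1)[OF d']
  assume h: "rcmod_hom D sM Mc (desc_action act \<sigma>) sN Nc (desc_action act' \<sigma>') f"
  then have kf: "klin_fam sM Mc sN Nc f"
    and fr: "\<And>x y z m g. m \<in> Mc x y \<Longrightarrow> g \<in> EndC D x y z \<Longrightarrow>
        f x z (desc_action act \<sigma> x y z m g) = desc_action act' \<sigma>' x y z (f x y m) g"
    by (auto simp: rcmod_hom_def)
  have fin: "\<And>x y m. m \<in> Mc x y \<Longrightarrow> f x y m \<in> Nc x y"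
    and fadd: "\<And>x y m m'. m \<in> Mc x y \<Longrightarrow> m' \<in> Mc x y \<Longrightarrow> f x y (m + m') = f x y m + f x y m'"
    using kf by (auto simp: klin_fam_def)
  have fa: "f x z (act x y z m a) = act' x y z (f x y m) a" if m: "m \<in> Mc x y" and a: "a \<in> Ah D y z" for x y z m a
    using fr[OF m rmul_End[OF a]] act_rho[OF d m a] act_rho[OF d' fin[OF m] a] by simp
  have "tMA D Nc act' x y (map (\<lambda>(p, a). (f x x p, a)) (\<sigma> x y m)) (\<sigma>' x y (f x y m))"
    if m: "m \<in> Mc x y" for x y m
  proof -
    have 1: "tMA D Nc act' x y (map (\<lambda>(p, a). (f x x p, a)) (\<sigma> x y m))
         (map (\<lambda>(p, a). (f x x p, a)) (map (\<lambda>j. (desc_action act \<sigma> x y x m (dual x y j), E x y j)) [0..<N x y]))"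
      using std_form[OF d m] unfolding tMA_def
      by (rule teq2_map1) (auto simp: fin fadd fa fi_in)
    have e: "map (\<lambda>(p, a). (f x x p, a)) (map (\<lambda>j. (desc_action act \<sigma> x y x m (dual x y j), E x y j)) [0..<N x y])
          = map (\<lambda>j. (desc_action act' \<sigma>' x y x (f x y m) (dual x y j), E x y j)) [0..<N x y]"
      using fr[OF m dual_End] by auto
    show ?thesis using 1 std_form[OF d' fin[OF m]] unfolding e tMA_def by (meson teq2_sym teq2_trans)
  qed
  then show "desc_hom D sM Mc act \<sigma> sN Nc act' \<sigma>' f"
    using kf fa by (simp add: desc_hom_def rmod_hom_def)
qed

end


lemma sum_list_upt_sum: "sum_list (map g [0..<n]) = (\<Sum>j<(n::nat). g j)"
  by (induction n) auto

context ctx begin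

definition actR :: "('x \<Rightarrow> 'x \<Rightarrow> 'x \<Rightarrow> 'm \<Rightarrow> ('a \<Rightarrow> 'a) \<Rightarrow> 'm) \<Rightarrow> 'x \<Rightarrow> 'x \<Rightarrow> 'x \<Rightarrow> 'm \<Rightarrow> 'a \<Rightarrow> 'm" where
  "actR \<rho> x y z m a = \<rho> x y z m (rmul x y z a)"
definition sigR :: "('x \<Rightarrow> 'x \<Rightarrow> 'x \<Rightarrow> 'm \<Rightarrow> ('a \<Rightarrow> 'a) \<Rightarrow> 'm) \<Rightarrow> 'x \<Rightarrow> 'x \<Rightarrow> 'm \<Rightarrow> ('m \<times> 'a) list" where
  "sigR \<rho> x y m = map (\<lambda>j. (\<rho> x y x m (dual x y j), E x y j)) [0..<N x y]"

lemma cunit_End: "cunit D x y \<in> EndC D x y y"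
  unfolding EndC_def cunit_def by (auto simp: Aadd lB_in)

lemma rmul_add: "a \<in> Ah D y z \<Longrightarrow> a' \<in> Ah D y z \<Longrightarrow> rmul x y z (a + a') = cadd D x y (rmul x y z a) (rmul x y z a')"
  by (auto simp: rmul_def cadd_def fun_eq_iff cmp_addR)
lemma rmul_scale: "a \<in> Ah D y z \<Longrightarrow> rmul x y z (sA D c a) = csc D x y c (rmul x y z a)"
  by (auto simp: rmul_def csc_def fun_eq_iff cmp_scaleR)
lemma rmul_comp: "a \<in> Ah D y z \<Longrightarrow> b \<in> Ah D z w \<Longrightarrow> ccomp D x y (rmul x y z a) (rmul x z w b) = rmul x y w (cmp D y z w a b)"
  by (auto simp: rmul_def ccomp_def fun_eq_iff cmp_assoc cmp_in)
lemma rmul_one: "rmul x y y (one D y) = cunit D x y"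
  by (auto simp: rmul_def cunit_def fun_eq_iff cmp_oneR)

lemma actR_rmod: assumes r: "rcmod D sM Mc \<rho>" shows "rmod D sM Mc (actR \<rho>)"
  unfolding rmod_def
proof (intro conjI allI ballI)
  show "module sM" by (rule rcmod_props(1)[OF r])
  fix x y show "ksubmod sM (Mc x y)" by (rule rcmod_props(2)[OF r])
next
  fix x y z m a assume "m \<in> Mc x y" "a \<in> Ah D y z"
  then show "actR \<rho> x y z m a \<in> Mc x z" unfolding actR_def by (intro rcmod_props(3)[OF r] rmul_End)
next
  fix x y z m m' a assume "m \<in> Mc x y" "m' \<in> Mc x y" "a \<in> Ah D y z"
  then show "actR \<rho> x y z (m + m') a = actR \<rho> x y z m a + actR \<rho> x y z m' a"
    unfolding actR_def by (intro rcmod_props(4)[OF r] rmul_End)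
next
  fix x y z m a a' assume "m \<in> Mc x y" "a \<in> Ah D y z" "a' \<in> Ah D y z"
  then show "actR \<rho> x y z m (a + a') = actR \<rho> x y z m a + actR \<rho> x y z m a'"
    unfolding actR_def by (simp add: rmul_add rcmod_props(5)[OF r] rmul_End)
next
  fix x y z c m a assume "m \<in> Mc x y" "a \<in> Ah D y z"
  then show "actR \<rho> x y z (sM c m) a = sM c (actR \<rho> x y z m a)"
    and "actR \<rho> x y z m (sA D c a) = sM c (actR \<rho> x y z m a)"
    unfolding actR_def by (simp_all add: rmul_scale rcmod_props(6,7)[OF r] rmul_End)
next
  fix x y z w m a b assume "m \<in> Mc x y" "a \<in> Ah D y z" "b \<in> Ah D z w"
  then show "actR \<rho> x z w (actR \<rho> x y z m a) b = actR \<rho> x y w m (cmp D y z w a b)"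
    unfolding actR_def by (simp add: rmul_comp rcmod_props(8)[OF r] rmul_End)
next
  fix x y m assume "m \<in> Mc x y"
  then show "actR \<rho> x y y m (one D y) = m"
    unfolding actR_def by (simp add: rmul_one rcmod_props(9)[OF r])
qed

lemma ccomp_End: assumes f: "f \<in> EndC D x y z" and g: "g \<in> EndC D x z w"
  shows "ccomp D x y f g \<in> EndC D x y w"
  unfolding EndC_def
proof (intro CollectI conjI ballI)
  show "ccomp D x y f g \<in> Ah D x y \<rightarrow> Ah D x w"
    using End_in[OF f] End_in[OF g] by (auto simp: ccomp_def)
  show "ccomp D x y f g \<in> extensional (Ah D x y)" by (simp add: ccomp_def)
  fix a a' assume a: "a \<in> Ah D x y" and a': "a' \<in> Ah D x y"
  show "ccomp D x y f g (a + a') = ccomp D x y f g a + ccomp D x y f g a'"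
    using End_add[OF f a a'] End_add[OF g End_in[OF f a] End_in[OF f a']] Aadd[OF a a']
    by (simp add: ccomp_def a a')
next
  fix b a assume b: "b \<in> Bc D x" and a: "a \<in> Ah D x y"
  show "ccomp D x y f g (lB D x y b a) = lB D x w b (ccomp D x y f g a)"
    using End_lin[OF f b a] End_lin[OF g b End_in[OF f a]] lB_in[OF b a]
    by (simp add: ccomp_def a)
qed

lemma recon:
  assumes r: "rcmod D sM Mc \<rho>" and m: "m \<in> Mc x y" and f: "f \<in> EndC D x y z"
  shows "sum_list (map (\<lambda>j. \<rho> x x z (\<rho> x y x m (dual x y j)) (rmul x x z (f (E x y j)))) [0..<N x y]) = \<rho> x y z m f"
proof -
  let ?F = "\<lambda>j. ccomp D x y (dual x y j) (rmul x x z (f (E x y j)))"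
  have FE: "?F j \<in> EndC D x y z" if "j < N x y" for j
    by (rule ccomp_End[OF dual_End[OF that] rmul_End[OF End_in[OF f E_in[OF that]]]])
  have "f = rsum x y ?F (N x y)"
  proof -
    have "f = restrict (\<lambda>c. \<Sum>j<N x y. cmp D x x z (fi D x (Ph x y j c)) (f (E x y j))) (Ah D x y)"
      by (rule End_recon[OF f])
    also have "\<dots> = rsum x y ?F (N x y)"
      unfolding rsum_def
      by (rule restrict_ext, rule sum.cong) (auto simp: ccomp_def rmul_app dual_app fi_in Ph_in)
    finally show ?thesis .
  qed
  then have "\<rho> x y z m f = \<rho> x y z m (rsum x y ?F (N x y))" by (rule arg_cong)
  also have "\<dots> = (\<Sum>j<N x y. \<rho> x y z m (?F j))" by (rule rho_sum[OF r m]) (rule FE)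
  also have "\<dots> = (\<Sum>j<N x y. \<rho> x x z (\<rho> x y x m (dual x y j)) (rmul x x z (f (E x y j))))"
    by (rule sum.cong) (auto simp: rcmod_props(8)[OF r m dual_End rmul_End] End_in[OF f] E_in)
  finally show ?thesis by (simp add: sum_list_upt_sum)
qed

lemma sigR_action:
  assumes r: "rcmod D sM Mc \<rho>" and m: "m \<in> Mc x y" and f: "f \<in> EndC D x y z"
  shows "desc_action (actR \<rho>) (sigR \<rho>) x y z m f = \<rho> x y z m f"
  unfolding desc_action_def sigR_def actR_def using recon[OF r m f] by (simp add: o_def)

end


context ctx begin

lemma FE_i:
  assumes a: "a \<in> Ah D y z" and k: "k < N x z"
  shows "rsum x y (\<lambda>j. ccomp D x y (dual x y j) (rmul x x x (fi D x (Ph x z k (cmp D x y z (E x y j) a))))) (N x y)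
         = ccomp D x y (rmul x y z a) (dual x z k)"
proof
  fix c show "rsum x y (\<lambda>j. ccomp D x y (dual x y j) (rmul x x x (fi D x (Ph x z k (cmp D x y z (E x y j) a))))) (N x y) c
         = ccomp D x y (rmul x y z a) (dual x z k) c"
  proof (cases "c \<in> Ah D x y")
    case c: True
    have ev: "cmp D x y z (E x y j) a \<in> Ah D x z" if "j < N x y" for j using that by (simp add: cmp_in E_in a)
    have "(\<Sum>j<N x y. ccomp D x y (dual x y j) (rmul x x x (fi D x (Ph x z k (cmp D x y z (E x y j) a)))) c)
        = (\<Sum>j<N x y. fi D x (Ph x z k (lB D x z (Ph x y j c) (cmp D x y z (E x y j) a))))"
    proof (rule sum.cong[OF refl])
      fix j assume "j \<in> {..<N x y}" then have j: "j < N x y" by simp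
      have "ccomp D x y (dual x y j) (rmul x x x (fi D x (Ph x z k (cmp D x y z (E x y j) a)))) c
          = cmp D x x x (fi D x (Ph x y j c)) (fi D x (Ph x z k (cmp D x y z (E x y j) a)))"
        using c j by (simp add: ccomp_def dual_app rmul_app fi_in Ph_in)
      also have "\<dots> = fi D x (bm D x (Ph x y j c) (Ph x z k (cmp D x y z (E x y j) a)))"
        by (rule fi_mult[symmetric]) (use c j k ev in \<open>auto intro: Ph_in\<close>)
      also have "\<dots> = fi D x (Ph x z k (lB D x z (Ph x y j c) (cmp D x y z (E x y j) a)))"
        by (subst Ph_lin[OF k Ph_in[OF j c] ev[OF j]]) rule
      finally show "ccomp D x y (dual x y j) (rmul x x x (fi D x (Ph x z k (cmp D x y z (E x y j) a)))) c
          = fi D x (Ph x z k (lB D x z (Ph x y j c) (cmp D x y z (E x y j) a)))" .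
    qed
    also have "\<dots> = fi D x (Ph x z k (\<Sum>j<N x y. lB D x z (Ph x y j c) (cmp D x y z (E x y j) a)))"
      by (subst Ph_sum[OF k], simp add: lB_in Ph_in c ev, subst fi_sum)
         (auto intro!: Ph_in[OF k] lB_in Ph_in c ev)
    also have "(\<Sum>j<N x y. lB D x z (Ph x y j c) (cmp D x y z (E x y j) a))
             = (\<Sum>j<N x y. cmp D x y z (lB D x y (Ph x y j c) (E x y j)) a)"
      by (rule sum.cong[OF refl]) (simp add: lB_def cmp_assoc fi_in Ph_in c E_in a)
    also have "\<dots> = cmp D x y z (\<Sum>j<N x y. lB D x y (Ph x y j c) (E x y j)) a"
      by (rule cmp_sumL[symmetric]) (auto intro!: lB_in Ph_in c E_in a)
    also have "\<dots> = cmp D x y z c a" using decomp[OF c] by simp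
    finally show ?thesis using c by (simp add: rsum_def ccomp_def rmul_app dual_app cmp_in a)
  next
    case False then show ?thesis by (simp add: rsum_def ccomp_def)
  qed
qed

lemma FE_ii:
  assumes j: "j < N x y" and k: "k < N x x"
  shows "ccomp D x y (dual x y j) (rmul x x x (fi D x (Ph x x k (one D x)))) = ccomp D x y (dual x y j) (dual x x k)"
proof
  fix c show "ccomp D x y (dual x y j) (rmul x x x (fi D x (Ph x x k (one D x)))) c = ccomp D x y (dual x y j) (dual x x k) c"
  proof (cases "c \<in> Ah D x y")
    case c: True
    have b: "Ph x y j c \<in> Bc D x" by (rule Ph_in[OF j c])
    have "ccomp D x y (dual x y j) (rmul x x x (fi D x (Ph x x k (one D x)))) c
        = cmp D x x x (fi D x (Ph x y j c)) (fi D x (Ph x x k (one D x)))"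
      using c by (simp add: ccomp_def dual_app rmul_app fi_in b)
    also have "\<dots> = fi D x (bm D x (Ph x y j c) (Ph x x k (one D x)))"
      by (rule fi_mult[symmetric]) (auto intro: b Ph_in[OF k] one_in)
    also have "\<dots> = fi D x (Ph x x k (lB D x x (Ph x y j c) (one D x)))"
      by (subst Ph_lin[OF k b one_in]) rule
    also have "lB D x x (Ph x y j c) (one D x) = fi D x (Ph x y j c)"
      by (simp add: lB_def cmp_oneR fi_in b)
    finally show ?thesis using c by (simp add: ccomp_def dual_app fi_in b)
  next
    case False then show ?thesis by (simp add: ccomp_def)
  qed
qed

end


lemma mset_concat_pairs: "mset (concat (map (\<lambda>j. [a j, b j]) J)) = mset (map a J @ map b J)"
  by (induction J) auto

context ctx begin

lemma part2:
  assumes r: "rcmod D sM Mc \<rho>"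
  shows "descent D sM Mc (actR \<rho>) (sigR \<rho>) \<and> same_cmod D Mc (desc_action (actR \<rho>) (sigR \<rho>)) \<rho>"
proof -
  note ra = actR_rmod[OF r]
  note ks = rcmod_props(2)[OF r]
  let ?act = "actR \<rho>" and ?sig = "sigR \<rho>"
  have uin: "\<rho> x y x m (dual x y j) \<in> Mc x x" if "m \<in> Mc x y" "j < N x y" for x y m j
    using that by (intro rcmod_props(3)[OF r] dual_End)
  have set: "set (?sig x y m) \<subseteq> Mc x x \<times> Ah D x y" if m: "m \<in> Mc x y" for x y m
    using m by (auto simp: sigR_def uin E_in)
  have add: "tMA D Mc ?act x y (?sig x y (m + m')) (?sig x y m @ ?sig x y m')"
    if m: "m \<in> Mc x y" and m': "m' \<in> Mc x y" for x y m m'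
  proof -
    let ?u = "\<lambda>j. \<rho> x y x m (dual x y j)" and ?v = "\<lambda>j. \<rho> x y x m' (dual x y j)"
    have e: "?sig x y (m + m') = concat (map (\<lambda>j. [(?u j + ?v j, E x y j)]) [0..<N x y])"
      by (simp add: sigR_def concat_singletons rcmod_props(4)[OF r m m' dual_End])
    have 1: "tMA D Mc ?act x y (concat (map (\<lambda>j. [(?u j + ?v j, E x y j)]) [0..<N x y]))
                                (concat (map (\<lambda>j. [(?u j, E x y j), (?v j, E x y j)]) [0..<N x y]))"
      unfolding tMA_def
      by (rule teq2_concat, rule teq2_addL) (auto simp: uin m m' E_in ksadd[OF ks])
    have 2: "tMA D Mc ?act x y (concat (map (\<lambda>j. [(?u j, E x y j), (?v j, E x y j)]) [0..<N x y]))
                                (?sig x y m @ ?sig x y m')"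
      unfolding tMA_def sigR_def
      by (rule teq2_mset[OF mset_concat_pairs]) (auto simp: uin m m' E_in)
    show ?thesis using 1 2 unfolding e tMA_def by (rule teq2_trans)
  qed
  have scale: "tMA D Mc ?act x y (?sig x y (sM c m)) (map (\<lambda>(p, a). (sM c p, a)) (?sig x y m))"
    if m: "m \<in> Mc x y" for x y c m
  proof -
    have "?sig x y (sM c m) = map (\<lambda>(p, a). (sM c p, a)) (?sig x y m)"
      by (simp add: sigR_def rcmod_props(6)[OF r m dual_End])
    then show ?thesis unfolding tMA_def using set[OF ksscale[OF ks m, where c=c]]
      by (simp add: teq2_refl)
  qed
  have ci: "tMA D Mc ?act x z (?sig x z (?act x y z m a)) (map (\<lambda>(p, a'). (p, cmp D x y z a' a)) (?sig x y m))"
    if m: "m \<in> Mc x y" and a: "a \<in> Ah D y z" for x y z m a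
  proof -
    let ?u = "\<lambda>j. \<rho> x y x m (dual x y j)" and ?v = "\<lambda>j. cmp D x y z (E x y j) a"
    let ?G = "\<lambda>j k. (?act x x x (?u j) (fi D x (Ph x z k (?v j))), E x z k)"
    have vin: "?v j \<in> Ah D x z" if "j < N x y" for j using that by (simp add: cmp_in E_in a)
    have Gin: "?G j k \<in> Mc x x \<times> Ah D x z" if "j < N x y" "k < N x z" for j k
      using that by (auto intro!: rmod_props(3)[OF ra] uin m fi_in Ph_in vin E_in)
    have R: "map (\<lambda>(p, a'). (p, cmp D x y z a' a)) (?sig x y m) = concat (map (\<lambda>j. [(?u j, ?v j)]) [0..<N x y])"
      by (simp add: sigR_def concat_singletons)
    have A: "tMA D Mc ?act x z (concat (map (\<lambda>j. [(?u j, ?v j)]) [0..<N x y]))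
                              (concat (map (\<lambda>j. map (\<lambda>k. ?G j k) [0..<N x z]) [0..<N x y]))"
      unfolding tMA_def by (rule teq2_concat) (auto intro!: expand1[OF ra, unfolded tMA_def] uin m vin)
    have B: "tMA D Mc ?act x z (concat (map (\<lambda>j. map (\<lambda>k. ?G j k) [0..<N x z]) [0..<N x y]))
                              (concat (map (\<lambda>k. map (\<lambda>j. ?G j k) [0..<N x y]) [0..<N x z]))"
      unfolding tMA_def by (rule teq2_mset[OF mset_swap]) (use Gin in auto)
    have C: "tMA D Mc ?act x z (concat (map (\<lambda>k. map (\<lambda>j. ?G j k) [0..<N x y]) [0..<N x z]))
                              (concat (map (\<lambda>k. [(\<rho> x z x (?act x y z m a) (dual x z k), E x z k)]) [0..<N x z]))"
      unfolding tMA_def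
    proof (rule teq2_concat)
      fix k assume "k \<in> set [0..<N x z]" then have k: "k < N x z" by simp
      let ?F = "\<lambda>j. ccomp D x y (dual x y j) (rmul x x x (fi D x (Ph x z k (?v j))))"
      have FE: "?F j \<in> EndC D x y x" if "j < N x y" for j
        by (rule ccomp_End[OF dual_End[OF that] rmul_End[OF fi_in[OF Ph_in[OF k vin[OF that]]]]])
      have "sum_list (map (\<lambda>j. ?act x x x (?u j) (fi D x (Ph x z k (?v j)))) [0..<N x y])
          = (\<Sum>j<N x y. \<rho> x y x m (?F j))"
        unfolding sum_list_upt_sum actR_def
        by (rule sum.cong[OF refl]) (simp add: rcmod_props(8)[OF r m dual_End rmul_End] fi_in Ph_in k vin)
      also have "\<dots> = \<rho> x y x m (rsum x y ?F (N x y))" by (rule rho_sum[OF r m, symmetric]) (rule FE)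
      also have "\<dots> = \<rho> x y x m (ccomp D x y (rmul x y z a) (dual x z k))" by (simp add: FE_i[OF a k])
      also have "\<dots> = \<rho> x z x (?act x y z m a) (dual x z k)"
        unfolding actR_def by (rule rcmod_props(8)[OF r m rmul_End[OF a] dual_End[OF k], symmetric])
      finally have eq: "sum_list (map (\<lambda>j. ?act x x x (?u j) (fi D x (Ph x z k (?v j)))) [0..<N x y])
          = \<rho> x z x (?act x y z m a) (dual x z k)" .
      have "teq2 (Mc x x) (Ah D x z) (\<lambda>b m. ?act x x x m (fi D x b)) (lB D x z) (Bc D x)
         [(sum_list (map (\<lambda>j. ?act x x x (?u j) (fi D x (Ph x z k (?v j)))) [0..<N x y]), E x z k)]
         (map (\<lambda>j. ?G j k) [0..<N x y])"
        by (rule teq2_sumL[OF E_in[OF k] ks0[OF ks] ksadd[OF ks]])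
           (auto intro!: rmod_props(3)[OF ra] uin m fi_in Ph_in k vin)
      then show "teq2 (Mc x x) (Ah D x z) (\<lambda>b m. ?act x x x m (fi D x b)) (lB D x z) (Bc D x)
         (map (\<lambda>j. ?G j k) [0..<N x y]) [(\<rho> x z x (?act x y z m a) (dual x z k), E x z k)]"
        unfolding eq by (rule teq2_sym)
    qed
    have L: "?sig x z (?act x y z m a) = concat (map (\<lambda>k. [(\<rho> x z x (?act x y z m a) (dual x z k), E x z k)]) [0..<N x z])"
      by (simp add: sigR_def concat_singletons)
    show ?thesis unfolding R L using A B C unfolding tMA_def by (meson teq2_sym teq2_trans)
  qed
  have cii: "tMAA D Mc ?act x y (concat (map (\<lambda>(p, a). map (\<lambda>(q, a'). (q, a', a)) (?sig x x p)) (?sig x y m)))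
                          (map (\<lambda>(p, a). (p, one D x, a)) (?sig x y m))"
    if m: "m \<in> Mc x y" for x y m
  proof -
    let ?u = "\<lambda>j. \<rho> x y x m (dual x y j)"
    have L: "concat (map (\<lambda>(p, a). map (\<lambda>(q, a'). (q, a', a)) (?sig x x p)) (?sig x y m))
        = concat (map (\<lambda>j. map (\<lambda>k. (\<rho> x x x (?u j) (dual x x k), E x x k, E x y j)) [0..<N x x]) [0..<N x y])"
      by (simp add: sigR_def o_def)
    have R: "map (\<lambda>(p, a). (p, one D x, a)) (?sig x y m) = concat (map (\<lambda>j. [(?u j, one D x, E x y j)]) [0..<N x y])"
      by (simp add: sigR_def concat_singletons)
    have "teq3 (Mc x x) (Ah D x x) (Ah D x y) (\<lambda>b m. ?act x x x m (fi D x b)) (lB D x x)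
      (\<lambda>b a. cmp D x x x a (fi D x b)) (lB D x y) (Bc D x)
      (concat (map (\<lambda>j. [(?u j, one D x, E x y j)]) [0..<N x y]))
      (concat (map (\<lambda>j. map (\<lambda>k. (\<rho> x x x (?u j) (dual x x k), E x x k, E x y j)) [0..<N x x]) [0..<N x y]))"
    proof (rule teq3_concat)
      fix j assume "j \<in> set [0..<N x y]" then have j: "j < N x y" by simp
      have p: "?u j \<in> Mc x x" by (rule uin[OF m j])
      have e: "E x y j \<in> Ah D x y" by (rule E_in[OF j])
      have s1: "teq3 (Mc x x) (Ah D x x) (Ah D x y) (\<lambda>b m. ?act x x x m (fi D x b)) (lB D x x)
          (\<lambda>b a. cmp D x x x a (fi D x b)) (lB D x y) (Bc D x)
          [(?u j, one D x, E x y j)] (map (\<lambda>k. (?u j, lB D x x (Ph x x k (one D x)) (E x x k), E x y j)) [0..<N x x])"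
        using teq3_sumM[OF p e A0[of x x] Aadd[of _ x x], where n="N x x" and h="\<lambda>k. lB D x x (Ph x x k (one D x)) (E x x k)"]
        by (simp add: decomp[OF one_in, symmetric] lB_in Ph_in one_in E_in)
      have s2: "teq3 (Mc x x) (Ah D x x) (Ah D x y) (\<lambda>b m. ?act x x x m (fi D x b)) (lB D x x)
          (\<lambda>b a. cmp D x x x a (fi D x b)) (lB D x y) (Bc D x)
          (concat (map (\<lambda>k. [(?u j, lB D x x (Ph x x k (one D x)) (E x x k), E x y j)]) [0..<N x x]))
          (concat (map (\<lambda>k. [(\<rho> x x x (?u j) (dual x x k), E x x k, E x y j)]) [0..<N x x]))"
      proof (rule teq3_concat)
        fix k assume "k \<in> set [0..<N x x]" then have k: "k < N x x" by simp
        have b: "Ph x x k (one D x) \<in> Bc D x" by (rule Ph_in[OF k one_in])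
        have "?act x x x (?u j) (fi D x (Ph x x k (one D x))) = \<rho> x x x (?u j) (dual x x k)"
          unfolding actR_def
          by (simp add: rcmod_props(8)[OF r m dual_End[OF j] rmul_End[OF fi_in[OF b]]]
                        rcmod_props(8)[OF r m dual_End[OF j] dual_End[OF k]] FE_ii[OF j k])
        moreover have "teq3 (Mc x x) (Ah D x x) (Ah D x y) (\<lambda>b m. ?act x x x m (fi D x b)) (lB D x x)
          (\<lambda>b a. cmp D x x x a (fi D x b)) (lB D x y) (Bc D x)
          [(?act x x x (?u j) (fi D x (Ph x x k (one D x))), E x x k, E x y j)]
          [(?u j, lB D x x (Ph x x k (one D x)) (E x x k), E x y j)]"
          by (rule teq3_balPQ[OF b p E_in[OF k] e]) (auto intro!: rmod_props(3)[OF ra] p fi_in b lB_in E_in k)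
        ultimately show "teq3 (Mc x x) (Ah D x x) (Ah D x y) (\<lambda>b m. ?act x x x m (fi D x b)) (lB D x x)
          (\<lambda>b a. cmp D x x x a (fi D x b)) (lB D x y) (Bc D x)
          [(?u j, lB D x x (Ph x x k (one D x)) (E x x k), E x y j)]
          [(\<rho> x x x (?u j) (dual x x k), E x x k, E x y j)]"
          by (simp add: teq3_sym)
      qed
      show "teq3 (Mc x x) (Ah D x x) (Ah D x y) (\<lambda>b m. ?act x x x m (fi D x b)) (lB D x x)
          (\<lambda>b a. cmp D x x x a (fi D x b)) (lB D x y) (Bc D x)
          [(?u j, one D x, E x y j)] (map (\<lambda>k. (\<rho> x x x (?u j) (dual x x k), E x x k, E x y j)) [0..<N x x])"
        using s1 s2 unfolding concat_singletons by (rule teq3_trans)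
    qed
    then show ?thesis unfolding L R tMAA_def by (rule teq3_sym)
  qed
  have act_same: "desc_action ?act ?sig x y z m f = \<rho> x y z m f" if "m \<in> Mc x y" "f \<in> EndC D x y z" for x y z m f
    by (rule sigR_action[OF r that])
  have ciii: "sum_list (map (\<lambda>(p, a). ?act x x y p a) (?sig x y m)) = m" if m: "m \<in> Mc x y" for x y m
  proof -
    have "sum_list (map (\<lambda>(p, a). ?act x x y p a) (?sig x y m)) = desc_action ?act ?sig x y y m (cunit D x y)"
      unfolding desc_action_def sigR_def by (intro arg_cong[where f=sum_list] map_cong refl) (auto simp: cunit_def E_in)
    also have "\<dots> = m" using act_same[OF m cunit_End] rcmod_props(9)[OF r m] by simp
    finally show ?thesis .
  qed
  have "descent D sM Mc ?act ?sig"
    unfolding descent_def by (simp add: ra set add scale ci cii ciii)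
  moreover have "same_cmod D Mc (desc_action ?act ?sig) \<rho>"
    unfolding same_cmod_def using act_same by blast
  ultimately show ?thesis by blast
qed

end


theorem theorem5p3:
  fixes D :: "('k::comm_ring_1, 'x, 'a::ab_group_add, 'b::ab_group_add) kdata"
  assumes "klin_cat D" and "diag_cat D" and "xfunctor D"
    and "\<forall>x y. fg_projective D x y"
  shows
    \<comment> \<open>the functor is well defined on objects\<close>
    "(\<forall>(sM :: 'k \<Rightarrow> 'm::ab_group_add \<Rightarrow> 'm) Mc act \<sigma>.
        descent D sM Mc act \<sigma> \<longrightarrow> rcmod D sM Mc (desc_action act \<sigma>)) \<and>
     \<comment> \<open>surjective on objects\<close>
     (\<forall>(sM :: 'k \<Rightarrow> 'm \<Rightarrow> 'm) Mc \<rho>. rcmod D sM Mc \<rho> \<longrightarrow>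
        (\<exists>act \<sigma>. descent D sM Mc act \<sigma> \<and> same_cmod D Mc (desc_action act \<sigma>) \<rho>)) \<and>
     \<comment> \<open>injective on objects\<close>
     (\<forall>(sM :: 'k \<Rightarrow> 'm \<Rightarrow> 'm) Mc act \<sigma> act' \<sigma>'.
        descent D sM Mc act \<sigma> \<and> descent D sM Mc act' \<sigma>' \<and>
        same_cmod D Mc (desc_action act \<sigma>) (desc_action act' \<sigma>') \<longrightarrow> same_desc D Mc act \<sigma> act' \<sigma>') \<and>
     \<comment> \<open>identity on morphisms: well defined, and bijective on hom-sets\<close>
     (\<forall>(sM :: 'k \<Rightarrow> 'm \<Rightarrow> 'm) Mc act \<sigma> (sN :: 'k \<Rightarrow> 'n::ab_group_add \<Rightarrow> 'n) Nc act' \<sigma>' f.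
        descent D sM Mc act \<sigma> \<and> descent D sN Nc act' \<sigma>' \<longrightarrow>
        (desc_hom D sM Mc act \<sigma> sN Nc act' \<sigma>' f \<longleftrightarrow>
         rcmod_hom D sM Mc (desc_action act \<sigma>) sN Nc (desc_action act' \<sigma>') f))"
proof -
  define P where "P = (\<lambda>x y (n::nat) (e::nat \<Rightarrow> 'a) (\<phi>::nat \<Rightarrow> 'a \<Rightarrow> 'b). (\<forall>j<n. e j \<in> Ah D x y) \<and> (\<forall>j<n. Blin_dual D x y (\<phi> j)) \<and>
      (\<forall>a\<in>Ah D x y. a = (\<Sum>j<n. lB D x y (\<phi> j a) (e j))))"
  have ex: "\<exists>n e \<phi>. P x y n e \<phi>" for x y using assms(4) unfolding fg_projective_def P_def by blast
  define N where "N x y = (SOME n. \<exists>e \<phi>. P x y n e \<phi>)" for x y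
  define E where "E x y = (SOME e. \<exists>\<phi>. P x y (N x y) e \<phi>)" for x y
  define Ph where "Ph x y = (SOME \<phi>. P x y (N x y) (E x y) \<phi>)" for x y
  have P: "P x y (N x y) (E x y) (Ph x y)" for x y
  proof -
    have "\<exists>e \<phi>. P x y (N x y) e \<phi>" unfolding N_def using someI_ex[OF ex[of x y]] .
    then have "\<exists>\<phi>. P x y (N x y) (E x y) \<phi>" unfolding E_def by (rule someI_ex)
    then show ?thesis unfolding Ph_def by (rule someI_ex)
  qed
  interpret ctx D N E Ph
    using assms(1-3) P unfolding P_def by unfold_locales auto
  show ?thesis
    apply (intro conjI allI impI)
    subgoal by (rule part1)
    subgoal using part2 by blast
    subgoal by (rule part3) auto
    subgoal by (rule part4) auto
    done
qed


end
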